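(* Let $I$ be a compact interval and $\{B^\epsilon\}_{\epsilon\in I}$ magnetic fields on $\mathcal{X}=\mathbb{R}^n$ with components $B^\epsilon_{jk}\in BC^\infty(\mathcal{X})$ such that $\epsilon\mapsto B^\epsilon_{jk}$ is continuous for the Fréchet topology of $BC^\infty(\mathcal{X})$; write $\diamond^\epsilon:=\diamond^{B^\epsilon}$. Let $I\ni\epsilon\mapsto\phi^\epsilon\in\mathfrak{L}$ be continuous and $\psi\in L^2(\mathcal{X}\times\mathcal{X})$. Then the map $I\ni\epsilon\mapsto\phi^\epsilon\diamond^\epsilon\psi\in L^2(\mathcal{X}\times\mathcal{X})$ is continuous.
   Context: $\mathfrak{L}=L^1(\mathcal{X};BC_u(\mathcal{X}))$ ($BC_u$ = bounded uniformly continuous functions), realized as functions $\phi(x,y)$ with norm $\|\phi\|_{\mathfrak L}=\int_{\mathcal X}dy\sup_{x}|\phi(x,y)|$. For a magnetic field $B$ let $\gamma^B(x,y,z)$ be the flux of $B$ through the triangle with vertices $x,x+y,x+y+z$, $\omega^B(x;y,z)=e^{-i\gamma^B(x,y,z)}$, and for $\phi\in\mathfrak L$, $\psi\in L^2(\mathcal X\times\mathcal X)$: $[\phi\diamond^B\psi](x,y)=\int_{\mathcal X}dz\,\phi(x+\tfrac{z-y}{2},z)\,\psi(x+\tfrac z2,y-z)\,\omega^B(x-\tfrac y2;z,y-z)$. *)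

theory Defs
  imports "HOL-Analysis.Analysis"
begin

fun pd :: "'n::finite list \<Rightarrow> (real^'n \<Rightarrow> real) \<Rightarrow> real^'n \<Rightarrow> real" where
  "pd [] f = f"
| "pd (i # is) f = (\<lambda>x. frechet_derivative (pd is f) (at x) (axis i 1))"

definition BC_inf :: "(real^'n::finite \<Rightarrow> real) \<Rightarrow> bool" where
  "BC_inf f \<longleftrightarrow> (\<forall>is. (\<forall>x. pd is f differentiable (at x)) \<and> bounded (range (pd is f)))"

definition magnetic_field :: "('n::finite \<Rightarrow> 'n \<Rightarrow> real^'n \<Rightarrow> real) \<Rightarrow> bool" where
  "magnetic_field B \<longleftrightarrow>
     (\<forall>j k. BC_inf (B j k)) \<and> (\<forall>j k x. B j k x = - B k j x) \<and>
     (\<forall>j k l x. pd [j] (B k l) x + pd [k] (B l j) x + pd [l] (B j k) x = 0)"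

text \<open>Flux of B through the triangle with vertices x, x+y, x+y+z
  (parametrised by x + s y + t z, 0 <= t <= s <= 1).\<close>
definition gammaB :: "('n::finite \<Rightarrow> 'n \<Rightarrow> real^'n \<Rightarrow> real) \<Rightarrow> real^'n \<Rightarrow> real^'n \<Rightarrow> real^'n \<Rightarrow> real" where
  "gammaB B x y z = integral {0..1} (\<lambda>s. integral {0..s} (\<lambda>t.
      (\<Sum>j\<in>UNIV. \<Sum>k\<in>UNIV. B j k (x + s *\<^sub>R y + t *\<^sub>R z) * (y $ j) * (z $ k))))"

definition omegaB :: "('n::finite \<Rightarrow> 'n \<Rightarrow> real^'n \<Rightarrow> real) \<Rightarrow> real^'n \<Rightarrow> real^'n \<Rightarrow> real^'n \<Rightarrow> complex" where
  "omegaB B x y z = cis (- gammaB B x y z)"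

definition BCu :: "('a::metric_space \<Rightarrow> complex) \<Rightarrow> bool" where
  "BCu g \<longleftrightarrow> bounded (range g) \<and> uniformly_continuous_on UNIV g"

text \<open>Simple BC_u-valued functions y \<mapsto> sum_i 1_{A_i}(y) g_i, realised as functions of (x,y).\<close>
definition simple_Lfrak :: "(real^'n::finite \<Rightarrow> real^'n \<Rightarrow> complex) \<Rightarrow> bool" where
  "simple_Lfrak s \<longleftrightarrow> (\<exists>(m::nat) A g. (\<forall>i<m. A i \<in> sets lebesgue \<and> emeasure lebesgue (A i) < \<infinity> \<and> BCu (g i))
       \<and> (\<forall>x y. s x y = (\<Sum>i<m. indicator (A i) y * g i x)))"

definition Lfrak_norm :: "(real^'n::finite \<Rightarrow> real^'n \<Rightarrow> complex) \<Rightarrow> ennreal" where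
  "Lfrak_norm \<phi> = (\<integral>\<^sup>+ y. (SUP x. ennreal (cmod (\<phi> x y))) \<partial>lebesgue)"

text \<open>Membership in L^1(X; BC_u(X)) (Bochner): every slice is BC_u, the map
  y \<mapsto> phi(.,y) is strongly measurable (a.e. limit of simple functions in sup norm)
  and its norm is integrable.\<close>
definition in_Lfrak :: "(real^'n::finite \<Rightarrow> real^'n \<Rightarrow> complex) \<Rightarrow> bool" where
  "in_Lfrak \<phi> \<longleftrightarrow> (\<forall>y. BCu (\<lambda>x. \<phi> x y)) \<and>
     (\<exists>s::nat \<Rightarrow> real^'n \<Rightarrow> real^'n \<Rightarrow> complex. (\<forall>k. simple_Lfrak (s k)) \<and>
          (AE y in lebesgue. ((\<lambda>k. SUP x. ennreal (cmod (\<phi> x y - s k x y))) \<longlongrightarrow> 0) sequentially)) \<and>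
     Lfrak_norm \<phi> < \<infinity>"

definition L2_norm_sq :: "(real^'n::finite \<Rightarrow> real^'n \<Rightarrow> complex) \<Rightarrow> ennreal" where
  "L2_norm_sq \<psi> = (\<integral>\<^sup>+ p. ennreal ((cmod (\<psi> (fst p) (snd p)))\<^sup>2) \<partial>lebesgue)"

definition in_L2 :: "(real^'n::finite \<Rightarrow> real^'n \<Rightarrow> complex) \<Rightarrow> bool" where
  "in_L2 \<psi> \<longleftrightarrow> (\<lambda>p. \<psi> (fst p) (snd p)) \<in> borel_measurable lebesgue \<and> L2_norm_sq \<psi> < \<infinity>"

definition diamondB :: "('n::finite \<Rightarrow> 'n \<Rightarrow> real^'n \<Rightarrow> real) \<Rightarrow> (real^'n \<Rightarrow> real^'n \<Rightarrow> complex)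
    \<Rightarrow> (real^'n \<Rightarrow> real^'n \<Rightarrow> complex) \<Rightarrow> real^'n \<Rightarrow> real^'n \<Rightarrow> complex" where
  "diamondB B \<phi> \<psi> x y = (LINT z|lebesgue.
      \<phi> (x + (1/2) *\<^sub>R (z - y)) z * \<psi> (x + (1/2) *\<^sub>R z) (y - z) * omegaB B (x - (1/2) *\<^sub>R y) z (y - z))"

end

theory Submission
  imports Defs
begin


lemma inner_eq:
  fixes f :: "real \<Rightarrow> real"
  assumes "s \<ge> 0"
  shows "integral {0..s} f = s * integral {0..1} (\<lambda>u. f (s*u))"
proof (cases "s = 0")
  case True then show ?thesis by simp
next
  case False
  then have sp: "s > 0" using assms by simp
  have img: "(\<lambda>x. x / s) ` {0..s} = {0..1}"
  proof
    show "(\<lambda>x. x / s) ` {0..s} \<subseteq> {0..1}" using sp by (auto simp: field_simps)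
    show "{0..1} \<subseteq> (\<lambda>x. x / s) ` {0..s}"
    proof
      fix u assume "u \<in> {0..(1::real)}"
      then have "u = (s*u)/s" "s*u \<in> {0..s}" using sp by (auto simp: mult_le_cancel_left1)
      then show "u \<in> (\<lambda>x. x / s) ` {0..s}" by blast
    qed
  qed
  have "integral ((\<lambda>x. x / s) ` {0..s}) (\<lambda>x. f (s * x)) = (1 / \<bar>s\<bar>) *\<^sub>R integral {0..s} f"
    using False by (rule integral_stretch_real)
  then show ?thesis using sp by (simp add: img field_simps)
qed

lemma inner_cont:
  fixes K :: "'q::topological_space \<Rightarrow> real \<Rightarrow> real \<Rightarrow> real"
  assumes K: "continuous_on UNIV (\<lambda>(q,s,t). K q s t)"
  shows "continuous_on (UNIV \<times> {0..1}) (\<lambda>(q,s). integral {0..s} (K q s))"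
proof -
  have "continuous_on (UNIV \<times> {0..1}) (\<lambda>(q,s). s * integral (cbox 0 1) (\<lambda>u. K q s (s*u)))"
  proof -
    have c1: "continuous_on ((UNIV \<times> {0..1}) \<times> cbox 0 1) (\<lambda>(x, u). (\<lambda>(q,s) u. K q s (s*u)) x u)"
    proof -
      have "continuous_on UNIV (\<lambda>x. (\<lambda>(q,s,t). K q s t) ((\<lambda>x. (fst (fst x), snd (fst x), snd (fst x) * snd x)) x))"
        by (rule continuous_on_compose2[OF K]) (auto intro!: continuous_intros)
      then have "continuous_on UNIV (\<lambda>(x, u). (\<lambda>(q,s) u. K q s (s*u)) x u)"
        by (simp add: case_prod_beta)
      then show ?thesis by (rule continuous_on_subset) auto
    qed
    have "continuous_on (UNIV \<times> {0..1}) (\<lambda>x. integral (cbox 0 1) ((\<lambda>(q,s) u. K q s (s*u)) x))"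
      by (rule integral_continuous_on_param[OF c1])
    then show ?thesis
      by (auto intro!: continuous_intros simp: split_beta)
  qed
  then show ?thesis
  proof (rule continuous_on_cong[THEN iffD1, rotated 2])
    fix x assume "x \<in> (UNIV::'q set) \<times> {0..(1::real)}"
    then show "(\<lambda>(q,s). s * integral (cbox 0 1) (\<lambda>u. K q s (s*u))) x = (\<lambda>(q,s). integral {0..s} (K q s)) x"
      using inner_eq[of "snd x" "K (fst x) (snd x)"] by (auto simp: case_prod_beta)
  qed simp
qed



definition Kg :: "('n::finite \<Rightarrow> 'n \<Rightarrow> real^'n \<Rightarrow> real) \<Rightarrow> real^'n \<Rightarrow> real^'n \<Rightarrow> real^'n \<Rightarrow> real \<Rightarrow> real \<Rightarrow> real" where
  "Kg B x y z s t = (\<Sum>j\<in>UNIV. \<Sum>k\<in>UNIV. B j k (x + s *\<^sub>R y + t *\<^sub>R z) * (y $ j) * (z $ k))"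

lemma gammaB_Kg: "gammaB B x y z = integral {0..1} (\<lambda>s. integral {0..s} (Kg B x y z s))"
  unfolding gammaB_def Kg_def ..

lemma Kg_cont:
  assumes "\<forall>j k. continuous_on UNIV (B j k)"
  shows "continuous_on UNIV (\<lambda>(q,s,t). Kg B (fst q) (fst (snd q)) (snd (snd q)) s t)"
  unfolding Kg_def case_prod_beta
  by (intro continuous_intros continuous_on_compose2[OF assms[rule_format]]) auto

lemma inner_gamma_cont:
  assumes "\<forall>j k. continuous_on UNIV (B j k)"
  shows "continuous_on (UNIV \<times> {0..1}) (\<lambda>(q,s). integral {0..s} (Kg B (fst q) (fst (snd q)) (snd (snd q)) s))"
  using inner_cont[OF Kg_cont[OF assms]] by simp

lemma gamma_cont:
  assumes "\<forall>j k. continuous_on UNIV (B j k)"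
  shows "continuous_on UNIV (\<lambda>q. gammaB B (fst q) (fst (snd q)) (snd (snd q)))"
proof -
  have "continuous_on (UNIV \<times> cbox 0 1) (\<lambda>(q, s). integral {0..s} (Kg B (fst q) (fst (snd q)) (snd (snd q)) s))"
    using inner_gamma_cont[OF assms] by simp
  from integral_continuous_on_param[OF this] show ?thesis
    by (simp add: gammaB_Kg)
qed

lemma gamma_diff:
  assumes c1: "\<forall>j k. continuous_on UNIV (B1 j k)" and c2: "\<forall>j k. continuous_on UNIV (B2 j k)"
    and e: "\<forall>j k w. \<bar>B1 j k w - B2 j k w\<bar> \<le> e"
  shows "\<bar>gammaB B1 x y z - gammaB B2 x y z\<bar> \<le> e * (\<Sum>j\<in>UNIV. \<Sum>k\<in>UNIV. \<bar>y $ j\<bar> * \<bar>z $ k\<bar>)"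
proof -
  define C where "C = e * (\<Sum>j\<in>UNIV. \<Sum>k\<in>UNIV. \<bar>y $ j\<bar> * \<bar>z $ k\<bar>)"
  have e0: "e \<ge> 0" using e by (metis abs_ge_zero order.trans)
  have C0: "C \<ge> 0" unfolding C_def using e0 by (auto intro!: mult_nonneg_nonneg sum_nonneg)
  let ?q = "(x,y,z)"
  have ic: "continuous_on {0..1} (\<lambda>s. integral {0..s} (Kg B x y z s))"
    if "\<forall>j k. continuous_on UNIV (B j k)" for B
  proof -
    have "continuous_on {0..1} (\<lambda>s. (\<lambda>(q,s). integral {0..s} (Kg B (fst q) (fst (snd q)) (snd (snd q)) s)) (?q, s))"
      by (rule continuous_on_compose2[OF inner_gamma_cont[OF that]]) (auto intro!: continuous_intros)
    then show ?thesis by simp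
  qed
  have kc: "continuous_on UNIV (\<lambda>t. Kg B x y z s t)" if "\<forall>j k. continuous_on UNIV (B j k)" for B s
  proof -
    have "continuous_on UNIV (\<lambda>t. (\<lambda>(q,s,t). Kg B (fst q) (fst (snd q)) (snd (snd q)) s t) (?q, s, t))"
      by (rule continuous_on_compose2[OF Kg_cont[OF that]]) (auto intro!: continuous_intros)
    then show ?thesis by simp
  qed
  have kd: "\<bar>Kg B1 x y z s t - Kg B2 x y z s t\<bar> \<le> C" for s t
  proof -
    have "\<bar>Kg B1 x y z s t - Kg B2 x y z s t\<bar> = \<bar>\<Sum>j\<in>UNIV. \<Sum>k\<in>UNIV. (B1 j k (x + s *\<^sub>R y + t *\<^sub>R z) - B2 j k (x + s *\<^sub>R y + t *\<^sub>R z)) * (y $ j) * (z $ k)\<bar>"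
      unfolding Kg_def by (simp add: sum_subtractf[symmetric] left_diff_distrib)
    also have "\<dots> \<le> (\<Sum>j\<in>UNIV. \<Sum>k\<in>UNIV. \<bar>(B1 j k (x + s *\<^sub>R y + t *\<^sub>R z) - B2 j k (x + s *\<^sub>R y + t *\<^sub>R z)) * (y $ j) * (z $ k)\<bar>)"
      by (rule order.trans[OF sum_abs]) (intro sum_mono sum_abs)
    also have "\<dots> \<le> (\<Sum>j\<in>UNIV. \<Sum>k\<in>UNIV. e * (\<bar>y $ j\<bar> * \<bar>z $ k\<bar>))"
      by (intro sum_mono) (auto simp: abs_mult mult.assoc intro!: mult_right_mono e[rule_format])
    finally show ?thesis by (simp add: C_def sum_distrib_left)
  qed
  have innerd: "\<bar>integral {0..s} (Kg B1 x y z s) - integral {0..s} (Kg B2 x y z s)\<bar> \<le> C" if s: "s \<in> {0..1}" for s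
  proof -
    have i1: "Kg B1 x y z s integrable_on {0..s}" and i2: "Kg B2 x y z s integrable_on {0..s}"
      using kc[OF c1, of s] kc[OF c2, of s]
      by (auto intro!: integrable_continuous_interval continuous_on_subset[of UNIV])
    have "\<bar>integral {0..s} (Kg B1 x y z s) - integral {0..s} (Kg B2 x y z s)\<bar> = norm (integral {0..s} (\<lambda>t. Kg B1 x y z s t - Kg B2 x y z s t))"
      using integral_diff[OF i1 i2] by simp
    also have "\<dots> \<le> integral {0..s} (\<lambda>t. C)"
      by (rule integral_norm_bound_integral) (use i1 i2 kd integrable_diff[OF i1 i2] in auto)
    also have "\<dots> = s * C" using s by simp
    also have "\<dots> \<le> C" using s C0 by (simp add: mult_left_le_one_le)
    finally show ?thesis .
  qed
  have o1: "(\<lambda>s. integral {0..s} (Kg B1 x y z s)) integrable_on {0..1}"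
    and o2: "(\<lambda>s. integral {0..s} (Kg B2 x y z s)) integrable_on {0..1}"
    using ic[OF c1] ic[OF c2] by (auto intro!: integrable_continuous_interval)
  have "\<bar>gammaB B1 x y z - gammaB B2 x y z\<bar> = norm (integral {0..1} (\<lambda>s. integral {0..s} (Kg B1 x y z s) - integral {0..s} (Kg B2 x y z s)))"
    unfolding gammaB_Kg using integral_diff[OF o1 o2] by simp
  also have "\<dots> \<le> integral {0..1} (\<lambda>t::real. C)"
    by (intro integral_norm_bound_integral integrable_diff o1 o2) (use innerd in auto)
  also have "\<dots> = C" by simp
  finally show ?thesis unfolding C_def .
qed



lemma nn_trans:
  fixes f :: "'a::euclidean_space \<Rightarrow> ennreal"
  assumes "f \<in> borel_measurable borel"
  shows "(\<integral>\<^sup>+x. f (x + c) \<partial>lborel) = integral\<^sup>N lborel f"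
proof -
  have "integral\<^sup>N lborel f = integral\<^sup>N (distr lborel borel ((+) c)) f"
    by (simp add: lborel_distr_plus)
  also have "\<dots> = (\<integral>\<^sup>+x. f (c + x) \<partial>lborel)"
    using assms by (subst nn_integral_distr) auto
  finally show ?thesis by (simp add: add.commute)
qed

lemma cont_meas_pair:
  fixes g :: "'a::euclidean_space \<times> 'b::euclidean_space \<Rightarrow> 'c::euclidean_space"
  assumes "continuous_on UNIV g"
  shows "g \<in> borel_measurable (lborel \<Otimes>\<^sub>M lborel)"
  using borel_measurable_continuous_onI[OF assms] by (simp add: lborel_prod)

lemma meas_test:
  fixes h :: "real^'n::finite \<Rightarrow> ennreal" and u :: "(real^'n) \<times> (real^'n) \<Rightarrow> ennreal"
  assumes [measurable]: "h \<in> borel_measurable borel" "u \<in> borel_measurable borel"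
  shows "(\<lambda>(p,z). h z * u (fst p + (1/2) *\<^sub>R z, snd p - z) ^ 2) \<in> borel_measurable (lborel \<Otimes>\<^sub>M lborel)"
proof -
  have g: "(\<lambda>x::((real^'n) \<times> (real^'n)) \<times> (real^'n). (fst (fst x) + (1/2) *\<^sub>R snd x, snd (fst x) - snd x)) \<in> borel_measurable (lborel \<Otimes>\<^sub>M lborel)"
    by (rule cont_meas_pair) (intro continuous_intros)
  have s: "(\<lambda>x::((real^'n) \<times> (real^'n)) \<times> (real^'n). snd x) \<in> borel_measurable (lborel \<Otimes>\<^sub>M lborel)"
    by (rule cont_meas_pair) (intro continuous_intros)
  have "(\<lambda>x. h (snd x) * u (fst (fst x) + (1/2) *\<^sub>R snd x, snd (fst x) - snd x) ^ 2) \<in> borel_measurable (lborel \<Otimes>\<^sub>M lborel)"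
    using measurable_compose[OF g assms(2)] measurable_compose[OF s assms(1)] by measurable
  then show ?thesis by (simp add: case_prod_beta)
qed



definition Tz :: "real^'n::finite \<Rightarrow> (real^'n) \<times> (real^'n) \<Rightarrow> (real^'n) \<times> (real^'n)" where
  "Tz z p = (fst p + (1/2) *\<^sub>R z, snd p - z)"

lemma Tz_cont: "continuous_on UNIV (\<lambda>x::((real^'n::finite) \<times> (real^'n)) \<times> (real^'n). Tz (snd x) (fst x))"
  unfolding Tz_def by (intro continuous_intros)

lemma Tz_meas: "(\<lambda>x::((real^'n::finite) \<times> (real^'n)) \<times> (real^'n). Tz (snd x) (fst x)) \<in> borel_measurable (lborel \<Otimes>\<^sub>M lborel)"
  by (rule cont_meas_pair[OF Tz_cont])

lemma snd_meas: "(\<lambda>x::((real^'n::finite) \<times> (real^'n)) \<times> (real^'n). snd x) \<in> borel_measurable (lborel \<Otimes>\<^sub>M lborel)"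
  by (rule cont_meas_pair) (intro continuous_intros)

lemma Tz_meas1: "(\<lambda>z. Tz z p) \<in> borel_measurable (lborel :: (real^'n::finite) measure)"
  unfolding Tz_def measurable_lborel2 by (intro borel_measurable_continuous_onI continuous_intros)

lemma Tz_meas2[measurable]: "Tz z \<in> borel_measurable (borel :: ((real^'n::finite) \<times> (real^'n)) measure)"
  unfolding Tz_def by (intro borel_measurable_continuous_onI continuous_intros)

lemma Tz_add: "Tz z p = p + ((1/2) *\<^sub>R z, - z)"
  unfolding Tz_def by (simp add: prod_eq_iff)

lemma sfL: "pair_sigma_finite (lborel :: ('a::euclidean_space) measure) (lborel :: ('b::euclidean_space) measure)"
  unfolding pair_sigma_finite_def by (simp add: sigma_finite_lborel)

lemma schur:
  fixes h :: "real^'n::finite \<Rightarrow> ennreal" and u :: "(real^'n) \<times> (real^'n) \<Rightarrow> ennreal"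
  assumes hm[measurable]: "h \<in> borel_measurable borel" and um[measurable]: "u \<in> borel_measurable borel"
  shows "(\<integral>\<^sup>+p. (\<integral>\<^sup>+z. h z * u (Tz z p) \<partial>lborel)^2 \<partial>lborel) \<le> (integral\<^sup>N lborel h)^2 * (\<integral>\<^sup>+p. (u p)^2 \<partial>lborel)"
proof -
  have hl[measurable]: "h \<in> borel_measurable lborel" by simp
  have gm[measurable]: "(\<lambda>z. u (Tz z p)) \<in> borel_measurable lborel" for p
    using measurable_compose[OF Tz_meas1 um] .
  have F[measurable]: "(\<lambda>(p,z). h z * u (Tz z p) ^ 2) \<in> borel_measurable (lborel \<Otimes>\<^sub>M lborel)"
    using measurable_compose[OF Tz_meas um] measurable_compose[OF snd_meas hm]
    by (simp add: case_prod_beta) measurable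
  have step1: "(\<integral>\<^sup>+z. h z * u (Tz z p) \<partial>lborel)^2 \<le> integral\<^sup>N lborel h * (\<integral>\<^sup>+z. h z * u (Tz z p)^2 \<partial>lborel)" for p
  proof -
    let ?M = "density lborel h"
    have "(\<integral>\<^sup>+z. 1 * u (Tz z p) \<partial>?M)^2 \<le> (\<integral>\<^sup>+z. 1^2 \<partial>?M) * (\<integral>\<^sup>+z. u (Tz z p)^2 \<partial>?M)"
      by (rule Cauchy_Schwarz_nn_integral) auto
    moreover have "(\<integral>\<^sup>+z. 1 * u (Tz z p) \<partial>?M) = (\<integral>\<^sup>+z. h z * u (Tz z p) \<partial>lborel)"
      by (simp add: nn_integral_density)
    moreover have "(\<integral>\<^sup>+z. 1^2 \<partial>?M) = integral\<^sup>N lborel h"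
      by (simp add: nn_integral_density emeasure_density)
    moreover have "(\<integral>\<^sup>+z. u (Tz z p)^2 \<partial>?M) = (\<integral>\<^sup>+z. h z * u (Tz z p)^2 \<partial>lborel)"
      by (simp add: nn_integral_density)
    ultimately show ?thesis by simp
  qed
  have "(\<integral>\<^sup>+p. (\<integral>\<^sup>+z. h z * u (Tz z p) \<partial>lborel)^2 \<partial>lborel) \<le> (\<integral>\<^sup>+p. integral\<^sup>N lborel h * (\<integral>\<^sup>+z. h z * u (Tz z p)^2 \<partial>lborel) \<partial>lborel)"
    by (intro nn_integral_mono step1)
  also have "\<dots> = integral\<^sup>N lborel h * (\<integral>\<^sup>+p. (\<integral>\<^sup>+z. h z * u (Tz z p)^2 \<partial>lborel) \<partial>lborel)"
    by (rule nn_integral_cmult) (use F in measurable)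
  also have "(\<integral>\<^sup>+p. (\<integral>\<^sup>+z. h z * u (Tz z p)^2 \<partial>lborel) \<partial>lborel) = (\<integral>\<^sup>+z. (\<integral>\<^sup>+p. h z * u (Tz z p)^2 \<partial>lborel) \<partial>lborel)"
    using pair_sigma_finite.Fubini'[OF sfL F] by simp
  also have "\<dots> = (\<integral>\<^sup>+z. h z * (\<integral>\<^sup>+p. (u p)^2 \<partial>lborel) \<partial>lborel)"
  proof (rule nn_integral_cong)
    fix z :: "real^'n"
    have "(\<integral>\<^sup>+p. h z * u (Tz z p)^2 \<partial>lborel) = h z * (\<integral>\<^sup>+p. u (Tz z p)^2 \<partial>lborel)"
      using measurable_compose[OF Tz_meas2 um] by (intro nn_integral_cmult) measurable
    also have "(\<integral>\<^sup>+p. u (Tz z p)^2 \<partial>lborel) = (\<integral>\<^sup>+p. (u p)^2 \<partial>lborel)"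
      unfolding Tz_add by (rule nn_trans) measurable
    finally show "(\<integral>\<^sup>+p. h z * u (Tz z p)^2 \<partial>lborel) = h z * (\<integral>\<^sup>+p. (u p)^2 \<partial>lborel)" .
  qed
  also have "\<dots> = integral\<^sup>N lborel h * (\<integral>\<^sup>+p. (u p)^2 \<partial>lborel)"
    by (rule nn_integral_multc) simp
  finally show ?thesis by (simp add: power2_eq_square mult.assoc)
qed



lemma BCu_cont: "BCu g \<Longrightarrow> continuous_on UNIV g"
  unfolding BCu_def by (auto intro: uniformly_continuous_imp_continuous)

lemma phi_struct:
  fixes \<phi> :: "real^'n::finite \<Rightarrow> real^'n \<Rightarrow> complex"
  assumes "in_Lfrak \<phi>"
  shows "\<exists>N. N \<in> null_sets lborel \<and> (\<lambda>p. if snd p \<in> N then 0 else \<phi> (fst p) (snd p)) \<in> borel_measurable borel"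
proof -
  from assms obtain s :: "nat \<Rightarrow> real^'n \<Rightarrow> real^'n \<Rightarrow> complex" where
    sL: "\<And>k. simple_Lfrak (s k)" and
    ae: "AE y in lebesgue. ((\<lambda>k. SUP x. ennreal (cmod (\<phi> x y - s k x y))) \<longlonglongrightarrow> 0)"
    unfolding in_Lfrak_def by blast
  have "\<forall>k. \<exists>(m::nat) A g. (\<forall>i<m. A i \<in> sets lebesgue \<and> emeasure lebesgue (A i) < \<infinity> \<and> BCu (g i))
       \<and> (\<forall>x y. s k x y = (\<Sum>i<m. indicator (A i) y * g i x))"
    by (intro allI) (rule sL[unfolded simple_Lfrak_def])
  then obtain m :: "nat \<Rightarrow> nat" where "\<forall>k. \<exists>A g. (\<forall>i<m k. A i \<in> sets lebesgue \<and> emeasure lebesgue (A i) < \<infinity> \<and> BCu (g i))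
       \<and> (\<forall>x y. s k x y = (\<Sum>i<m k. indicator (A i) y * g i x))"
    by (rule choice[THEN exE])
  then obtain A where "\<forall>k. \<exists>g. (\<forall>i<m k. A k i \<in> sets lebesgue \<and> emeasure lebesgue (A k i) < \<infinity> \<and> BCu (g i))
       \<and> (\<forall>x y. s k x y = (\<Sum>i<m k. indicator (A k i) y * g i x))"
    by (rule choice[THEN exE])
  then obtain g where g: "\<forall>k. (\<forall>i<m k. A k i \<in> sets lebesgue \<and> emeasure lebesgue (A k i) < \<infinity> \<and> BCu (g k i))
       \<and> (\<forall>x y. s k x y = (\<Sum>i<m k. indicator (A k i) y * g k i x))"
    by (rule choice[THEN exE])
  have mAg: "\<And>k i. i < m k \<Longrightarrow> A k i \<in> sets lebesgue \<and> BCu (g k i)"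
    and seq: "\<And>k x y. s k x y = (\<Sum>i<m k. indicator (A k i) y * g k i x)"
    using g by auto
  have "\<forall>ki. \<exists>SN. let k = fst ki; i = snd ki; S = fst SN; N' = snd SN in i < m k \<longrightarrow> (A k i - S \<subseteq> N' \<and> S \<subseteq> A k i \<and> N' \<in> null_sets lborel \<and> S \<in> sets borel)"
  proof (intro allI)
    fix ki :: "nat \<times> nat"
    obtain k i where ki: "ki = (k,i)" by (cases ki)
    have "\<exists>S N'. i < m k \<longrightarrow> (A k i - S \<subseteq> N' \<and> S \<subseteq> A k i \<and> N' \<in> null_sets lborel \<and> S \<in> sets borel)"
    proof (cases "i < m k")
      case True
      then have "A k i \<in> sets (completion lborel)" using mAg by simp
      then obtain S N0 N' where e1: "A k i = S \<union> N0" and e2: "N0 \<subseteq> N'" and e3: "N' \<in> null_sets lborel" and e4: "S \<in> sets lborel"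
        by (rule sets_completionE)
      have "A k i - S \<subseteq> N'" using e1 e2 by (simp add: Diff_subset_conv le_supI2)
      moreover have "S \<subseteq> A k i" using e1 by simp
      moreover have "S \<in> sets borel" using e4 by simp
      ultimately show ?thesis using e3 by blast
    qed auto
    then obtain S N' where "i < m k \<longrightarrow> (A k i - S \<subseteq> N' \<and> S \<subseteq> A k i \<and> N' \<in> null_sets lborel \<and> S \<in> sets borel)"
      by (elim exE)
    then show "\<exists>SN. let k = fst ki; i = snd ki; S = fst SN; N' = snd SN in i < m k \<longrightarrow> (A k i - S \<subseteq> N' \<and> S \<subseteq> A k i \<and> N' \<in> null_sets lborel \<and> S \<in> sets borel)"
      by (intro exI[of _ "(S,N')"]) (simp only: ki Let_def fst_conv snd_conv)
  qed
  then obtain F where F: "\<forall>ki. let k = fst ki; i = snd ki; S = fst (F ki); N' = snd (F ki) in i < m k \<longrightarrow> (A k i - S \<subseteq> N' \<and> S \<subseteq> A k i \<and> N' \<in> null_sets lborel \<and> S \<in> sets borel)"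
    by (rule choice[THEN exE])
  define S where "S k i = fst (F (k,i))" for k i
  define N' where "N' k i = snd (F (k,i))" for k i
  have SN: "\<And>k i. i < m k \<Longrightarrow> A k i - S k i \<subseteq> N' k i \<and> S k i \<subseteq> A k i \<and> N' k i \<in> null_sets lborel \<and> S k i \<in> sets borel"
    using F[rule_format, of "(k,i)" for k i] by (simp add: S_def N'_def Let_def)
  have "AE y in lborel. ((\<lambda>k. SUP x. ennreal (cmod (\<phi> x y - s k x y))) \<longlonglongrightarrow> 0)"
    using ae by (simp add: AE_completion_iff)
  then obtain N0 where N0: "{y \<in> space lborel. \<not> ((\<lambda>k. SUP x. ennreal (cmod (\<phi> x y - s k x y))) \<longlonglongrightarrow> 0)} \<subseteq> N0"
    "emeasure lborel N0 = 0" "N0 \<in> sets lborel"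
    by (rule AE_E)
  then have N0n: "N0 \<in> null_sets lborel" by auto
  define N where "N = N0 \<union> (\<Union>k. \<Union>i. if i < m k then N' k i else {})"
  have Nnull: "N \<in> null_sets lborel"
  proof -
    have "(\<Union>k. \<Union>i. if i < m k then N' k i else {}) \<in> null_sets lborel"
    proof (intro null_sets_UN)
      fix k i show "(if i < m k then N' k i else {}) \<in> null_sets lborel"
        using SN[where k=k and i=i] by (cases "i < m k") auto
    qed
    then show ?thesis unfolding N_def using N0n by (rule null_sets.Un[rotated])
  qed
  define t where "t k p = (if snd p \<in> N then 0 else (\<Sum>i<m k. indicator (S k i) (snd p) * g k i (fst p)))"
    for k and p :: "(real^'n) \<times> (real^'n)"
  have tm: "t k \<in> borel_measurable borel" for k
  proof -
    have gm: "g k i \<in> borel_measurable borel" if "i < m k" for i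
      using mAg[OF that] by (intro borel_measurable_continuous_onI BCu_cont) auto
    have Nb: "N \<in> sets borel" using Nnull by auto
    have "(\<lambda>p::(real^'n) \<times> (real^'n). (\<Sum>i<m k. indicator (S k i) (snd p) * g k i (fst p))) \<in> borel_measurable borel"
    proof (rule borel_measurable_sum)
      fix i assume "i \<in> {..<m k}"
      then have i: "i < m k" by simp
      have [measurable]: "S k i \<in> sets borel" using SN[OF i] by simp
      note gm[OF i, measurable]
      show "(\<lambda>p::(real^'n) \<times> (real^'n). indicator (S k i) (snd p) * g k i (fst p)) \<in> borel_measurable borel"
        unfolding borel_prod[symmetric] by measurable
    qed
    then show ?thesis
      unfolding t_def using Nb unfolding borel_prod[symmetric] by measurable
  qed
  have lim: "(\<lambda>k. t k p) \<longlonglongrightarrow> (if snd p \<in> N then 0 else \<phi> (fst p) (snd p))" for p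
  proof (cases "snd p \<in> N")
    case True then show ?thesis by (simp add: t_def)
  next
    case False
    obtain x y where p: "p = (x,y)" by (cases p)
    with False have yN: "y \<notin> N" by simp
    have teq: "t k p = s k x y" for k
    proof -
      have "indicator (S k i) y = (indicator (A k i) y :: complex)" if "i < m k" for i
      proof -
        have "y \<notin> N' k i" using yN that by (auto simp: N_def)
        then have "y \<in> S k i \<longleftrightarrow> y \<in> A k i" using SN[OF that] by blast
        then show ?thesis by (simp add: indicator_def)
      qed
      then show ?thesis using yN by (simp add: t_def p seq)
    qed
    have h: "(\<lambda>k. SUP x. ennreal (cmod (\<phi> x y - s k x y))) \<longlonglongrightarrow> 0"
      using N0(1) yN by (auto simp: N_def)
    have "(\<lambda>k. ennreal (cmod (\<phi> x y - s k x y))) \<longlonglongrightarrow> 0"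
      by (rule tendsto_sandwich[OF _ _ tendsto_const h]) (auto intro!: always_eventually SUP_upper2[where i=x])
    then have that_h: "(\<lambda>k. cmod (\<phi> x y - s k x y)) \<longlonglongrightarrow> 0"
      by (simp add: ennreal_tendsto_0_iff)
    have "(\<lambda>k. s k x y) \<longlonglongrightarrow> \<phi> x y"
    proof -
      have "(\<lambda>k. \<phi> x y - s k x y) \<longlonglongrightarrow> 0" using that_h by (simp add: tendsto_norm_zero_iff)
      from tendsto_diff[OF tendsto_const[of "\<phi> x y"] this] show ?thesis by simp
    qed
    then show ?thesis using yN teq by (simp add: p)
  qed
  have "(\<lambda>p. if snd p \<in> N then 0 else \<phi> (fst p) (snd p)) \<in> borel_measurable borel"
    by (rule borel_measurable_LIMSEQ_metric[OF tm lim])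
  then show ?thesis using Nnull by blast
qed



lemma sup_dense:
  fixes g :: "'a::topological_space \<Rightarrow> ennreal"
  assumes g: "continuous_on UNIV g" and D: "\<forall>X. open X \<longrightarrow> X \<noteq> {} \<longrightarrow> (\<exists>d\<in>D. d \<in> X)"
  shows "(SUP w. g w) = (SUP d\<in>D. g d)"
proof (rule antisym)
  show "(SUP d\<in>D. g d) \<le> (SUP w. g w)" by (rule SUP_subset_mono) auto
  show "(SUP w. g w) \<le> (SUP d\<in>D. g d)"
  proof (rule SUP_least)
    fix w
    show "g w \<le> (SUP d\<in>D. g d)"
    proof (rule ccontr)
      assume "\<not> g w \<le> (SUP d\<in>D. g d)"
      then have w: "w \<in> {x. (SUP d\<in>D. g d) < g x}" by auto
      have "open {x. (SUP d\<in>D. g d) < g x}"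
        by (rule open_Collect_less) (auto intro: g continuous_on_const)
      with w D obtain d where "d \<in> D" "(SUP d\<in>D. g d) < g d" by blast
      then show False using SUP_upper[of d D g] by auto
    qed
  qed
qed

lemma sup_meas:
  fixes f :: "real^'n::finite \<Rightarrow> real^'n \<Rightarrow> complex"
  assumes fm: "(\<lambda>p. f (fst p) (snd p)) \<in> borel_measurable borel"
    and fc: "\<And>z. continuous_on UNIV (\<lambda>w. f w z)"
  shows "(\<lambda>z. SUP w. ennreal (cmod (f w z))) \<in> borel_measurable borel"
proof -
  obtain D :: "(real^'n) set" where D1: "countable D" and D2: "\<And>X. open X \<Longrightarrow> X \<noteq> {} \<Longrightarrow> \<exists>d\<in>D. d \<in> X"
    by (erule countable_dense_setE)
  have D: "countable D" "\<forall>X. open X \<longrightarrow> X \<noteq> {} \<longrightarrow> (\<exists>d\<in>D. d \<in> X)" using D1 D2 by auto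
  have eq: "(SUP w. ennreal (cmod (f w z))) = (SUP d\<in>D. ennreal (cmod (f d z)))" for z
    by (rule sup_dense[OF _ D(2)]) (intro continuous_on_ennreal continuous_on_norm fc)
  have m: "(\<lambda>z. ennreal (cmod (f d z))) \<in> borel_measurable borel" for d
  proof -
    have "(\<lambda>z::real^'n. (d, z)) \<in> borel_measurable borel"
      by (intro borel_measurable_continuous_onI continuous_intros)
    from measurable_compose[OF this fm] show ?thesis by simp
  qed
  show ?thesis unfolding eq using D(1) m by measurable
qed



lemma psi_struct:
  fixes \<psi> :: "real^'n::finite \<Rightarrow> real^'n \<Rightarrow> complex"
  assumes "in_L2 \<psi>"
  shows "\<exists>N. N \<in> null_sets lborel \<and> (\<lambda>p. if p \<in> N then 0 else \<psi> (fst p) (snd p)) \<in> borel_measurable borel"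
proof -
  have m: "(\<lambda>p. \<psi> (fst p) (snd p)) \<in> borel_measurable (completion lborel)"
    using assms unfolding in_L2_def by simp
  have "(\<lambda>p. Re (\<psi> (fst p) (snd p))) \<in> borel_measurable (completion lborel)" using m by measurable
  from completion_ex_borel_measurable_real[OF this] obtain g1 where
    g1: "g1 \<in> borel_measurable lborel" "AE p in lborel. Re (\<psi> (fst p) (snd p)) = g1 p" by blast
  have "(\<lambda>p. Im (\<psi> (fst p) (snd p))) \<in> borel_measurable (completion lborel)" using m by measurable
  from completion_ex_borel_measurable_real[OF this] obtain g2 where
    g2: "g2 \<in> borel_measurable lborel" "AE p in lborel. Im (\<psi> (fst p) (snd p)) = g2 p" by blast
  have "AE p in lborel. \<psi> (fst p) (snd p) = Complex (g1 p) (g2 p)"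
    using g1(2) g2(2) by eventually_elim (simp add: complex_eq_iff)
  then obtain N where N: "{p \<in> space lborel. \<not> \<psi> (fst p) (snd p) = Complex (g1 p) (g2 p)} \<subseteq> N"
    "emeasure lborel N = 0" "N \<in> sets lborel"
    by (rule AE_E)
  have Nn: "N \<in> null_sets lborel" using N by auto
  have [measurable]: "N \<in> sets borel" "g1 \<in> borel_measurable borel" "g2 \<in> borel_measurable borel" using N(3) g1(1) g2(1) by auto
  have "(\<lambda>p. if p \<in> N then 0 else complex_of_real (g1 p) + \<i> * complex_of_real (g2 p)) \<in> borel_measurable borel"
    by measurable
  then have "(\<lambda>p. if p \<in> N then 0 else Complex (g1 p) (g2 p)) \<in> borel_measurable borel"
    unfolding Complex_eq .
  moreover have "(\<lambda>p. if p \<in> N then 0 else Complex (g1 p) (g2 p)) = (\<lambda>p. if p \<in> N then 0 else \<psi> (fst p) (snd p))"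
  proof (rule ext)
    fix p show "(if p \<in> N then 0 else Complex (g1 p) (g2 p)) = (if p \<in> N then 0 else \<psi> (fst p) (snd p))"
      using N(1) by (cases "p \<in> N") (auto simp: subset_iff, metis prod.collapse)
  qed
  ultimately show ?thesis using Nn by auto
qed

lemma null_section:
  fixes N :: "((real^'n::finite) \<times> (real^'n)) set"
  assumes N: "N \<in> null_sets lborel"
  shows "AE p in lborel. AE z in lborel. Tz z p \<notin> N"
proof -
  have Nb[measurable]: "N \<in> sets borel" using N by auto
  have F[measurable]: "(\<lambda>(p,z). indicator N (Tz z p) :: ennreal) \<in> borel_measurable (lborel \<Otimes>\<^sub>M lborel)"
    using measurable_compose[OF Tz_meas borel_measurable_indicator[OF Nb]]
    unfolding case_prod_unfold .
  have "(\<integral>\<^sup>+p. (\<integral>\<^sup>+z. indicator N (Tz z p) \<partial>lborel) \<partial>lborel) = (\<integral>\<^sup>+z. (\<integral>\<^sup>+p. indicator N (Tz z p) \<partial>lborel) \<partial>lborel)"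
    using pair_sigma_finite.Fubini'[OF sfL F] by simp
  also have "\<dots> = (\<integral>\<^sup>+(z::real^'n). 0 \<partial>lborel)"
  proof (rule nn_integral_cong)
    fix z :: "real^'n"
    have "(\<integral>\<^sup>+p. indicator N (Tz z p) \<partial>lborel) = (\<integral>\<^sup>+p. indicator N p \<partial>lborel)"
      unfolding Tz_add by (rule nn_trans) simp
    also have "\<dots> = 0" using N by auto
    finally show "(\<integral>\<^sup>+p. indicator N (Tz z p) \<partial>lborel) = (0::ennreal)" .
  qed
  finally have "(\<integral>\<^sup>+p. (\<integral>\<^sup>+z. indicator N (Tz z p) \<partial>lborel) \<partial>lborel) = 0" by simp
  then have "AE p in lborel. (\<integral>\<^sup>+z. indicator N (Tz z p) \<partial>lborel) = 0"
    by (subst (asm) nn_integral_0_iff_AE) (use F in measurable)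
  moreover have "AE z in lborel. Tz z p \<notin> N" if "(\<integral>\<^sup>+z. indicator N (Tz z p) \<partial>lborel) = (0::ennreal)" for p
  proof -
    from that have "AE z in lborel. (indicator N (Tz z p) :: ennreal) = 0"
      by (subst (asm) nn_integral_0_iff_AE) (use measurable_compose[OF Tz_meas1 borel_measurable_indicator[OF Nb]] in simp_all)
    then show "AE z in lborel. Tz z p \<notin> N"
      by eventually_elim (simp add: indicator_def split: if_splits)
  qed
  ultimately show ?thesis by (auto elim: AE_mp)
qed



definition phi0 :: "(real^'n::finite \<Rightarrow> real^'n \<Rightarrow> complex) \<Rightarrow> (real^'n) set \<Rightarrow> (real^'n) \<times> (real^'n) \<Rightarrow> complex" where
  "phi0 \<phi> N p = (if snd p \<in> N then 0 else \<phi> (fst p) (snd p))"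

definition Phi :: "(real^'n::finite \<Rightarrow> real^'n \<Rightarrow> complex) \<Rightarrow> (real^'n) set \<Rightarrow> real^'n \<Rightarrow> ennreal" where
  "Phi \<phi> N z = (SUP w. ennreal (cmod (phi0 \<phi> N (w, z))))"

definition psi0 :: "(real^'n::finite \<Rightarrow> real^'n \<Rightarrow> complex) \<Rightarrow> ((real^'n) \<times> (real^'n)) set \<Rightarrow> (real^'n) \<times> (real^'n) \<Rightarrow> complex" where
  "psi0 \<psi> N p = (if p \<in> N then 0 else \<psi> (fst p) (snd p))"

definition om :: "('n::finite \<Rightarrow> 'n \<Rightarrow> real^'n \<Rightarrow> real) \<Rightarrow> (real^'n) \<times> (real^'n) \<Rightarrow> real^'n \<Rightarrow> complex" where
  "om B p z = omegaB B (fst p - (1/2) *\<^sub>R snd p) z (snd p - z)"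

definition Fi where
  "Fi B \<phi> N\<phi> \<psi> N\<psi> p z = phi0 \<phi> N\<phi> (fst p + (1/2) *\<^sub>R (z - snd p), z) * psi0 \<psi> N\<psi> (Tz z p) * om B p z"

lemma om_norm[simp]: "cmod (om B p z) = 1"
  by (simp add: om_def omegaB_def)

lemma om_cont:
  assumes "\<forall>j k. continuous_on UNIV (B j k)"
  shows "continuous_on UNIV (\<lambda>x::((real^'n::finite) \<times> (real^'n)) \<times> (real^'n). om B (fst x) (snd x))"
proof -
  have "continuous_on UNIV (\<lambda>x::((real^'n) \<times> (real^'n)) \<times> (real^'n). (\<lambda>q. gammaB B (fst q) (fst (snd q)) (snd (snd q)))
      ((\<lambda>x. (fst (fst x) - (1/2) *\<^sub>R snd (fst x), snd x, snd (fst x) - snd x)) x))"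
    by (rule continuous_on_compose2[OF gamma_cont[OF assms]]) (auto intro!: continuous_intros)
  then have "continuous_on UNIV (\<lambda>x::((real^'n) \<times> (real^'n)) \<times> (real^'n). cis (- gammaB B (fst (fst x) - (1/2) *\<^sub>R snd (fst x)) (snd x) (snd (fst x) - snd x)))"
    by (auto intro!: continuous_intros continuous_on_compose2[OF continuous_on_cis[OF continuous_on_id]])
  then show ?thesis by (simp add: om_def omegaB_def)
qed

lemma Fi_meas:
  fixes B :: "'n::finite \<Rightarrow> 'n \<Rightarrow> real^'n \<Rightarrow> real"
  assumes "\<forall>j k. continuous_on UNIV (B j k)"
    and pm: "phi0 \<phi> N\<phi> \<in> borel_measurable borel" and qm: "psi0 \<psi> N\<psi> \<in> borel_measurable borel"
  shows "(\<lambda>x. Fi B \<phi> N\<phi> \<psi> N\<psi> (fst x) (snd x)) \<in> borel_measurable (lborel \<Otimes>\<^sub>M lborel)"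
proof -
  have a: "(\<lambda>x::((real^'n) \<times> (real^'n)) \<times> (real^'n). (fst (fst x) + (1/2) *\<^sub>R (snd x - snd (fst x)), snd x)) \<in> borel_measurable (lborel \<Otimes>\<^sub>M lborel)"
    by (rule cont_meas_pair) (intro continuous_intros)
  have o: "(\<lambda>x::((real^'n) \<times> (real^'n)) \<times> (real^'n). om B (fst x) (snd x)) \<in> borel_measurable (lborel \<Otimes>\<^sub>M lborel)"
    by (rule cont_meas_pair[OF om_cont[OF assms(1)]])
  show ?thesis unfolding Fi_def
    using measurable_compose[OF a pm] measurable_compose[OF Tz_meas qm] o by measurable
qed

lemma Fi_bound:
  "ennreal (cmod (Fi B \<phi> N\<phi> \<psi> N\<psi> p z)) \<le> Phi \<phi> N\<phi> z * ennreal (cmod (psi0 \<psi> N\<psi> (Tz z p)))"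
proof -
  have "ennreal (cmod (Fi B \<phi> N\<phi> \<psi> N\<psi> p z)) = ennreal (cmod (phi0 \<phi> N\<phi> (fst p + (1/2) *\<^sub>R (z - snd p), z))) * ennreal (cmod (psi0 \<psi> N\<psi> (Tz z p)))"
    by (simp add: Fi_def norm_mult ennreal_mult)
  also have "\<dots> \<le> Phi \<phi> N\<phi> z * ennreal (cmod (psi0 \<psi> N\<psi> (Tz z p)))"
    unfolding Phi_def by (intro mult_right_mono SUP_upper) auto
  finally show ?thesis .
qed

lemma phi0_cont:
  assumes "in_Lfrak \<phi>"
  shows "continuous_on UNIV (\<lambda>w. phi0 \<phi> N (w, z))"
proof (cases "z \<in> N")
  case True then show ?thesis by (simp add: phi0_def)
next
  case False
  have "BCu (\<lambda>x. \<phi> x z)" using assms by (simp add: in_Lfrak_def)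
  then show ?thesis using False by (simp add: phi0_def BCu_cont)
qed

lemma Phi_meas:
  assumes "in_Lfrak \<phi>" and pm: "phi0 \<phi> N \<in> borel_measurable borel"
  shows "Phi \<phi> N \<in> borel_measurable borel"
  unfolding Phi_def using pm phi0_cont[OF assms(1)] by (intro sup_meas) auto

lemma Phi_int:
  assumes "N \<in> null_sets lborel"
  shows "integral\<^sup>N lborel (Phi \<phi> N) = Lfrak_norm \<phi>"
proof -
  have "Lfrak_norm \<phi> = (\<integral>\<^sup>+ y. (SUP x. ennreal (cmod (\<phi> x y))) \<partial>lborel)"
    unfolding Lfrak_norm_def by (simp add: nn_integral_completion)
  also have "\<dots> = integral\<^sup>N lborel (Phi \<phi> N)"
    using AE_not_in[OF assms] by (intro nn_integral_cong_AE) (auto simp: Phi_def phi0_def)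
  finally show ?thesis ..
qed



lemma Fi_meas1:
  fixes B :: "'n::finite \<Rightarrow> 'n \<Rightarrow> real^'n \<Rightarrow> real"
  assumes "\<forall>j k. continuous_on UNIV (B j k)"
    and pm: "phi0 \<phi> N\<phi> \<in> borel_measurable borel" and qm: "psi0 \<psi> N\<psi> \<in> borel_measurable borel"
  shows "Fi B \<phi> N\<phi> \<psi> N\<psi> p \<in> borel_measurable lborel"
  using measurable_Pair2[OF Fi_meas[OF assms], of p] by simp

lemma repr:
  fixes B :: "'n::finite \<Rightarrow> 'n \<Rightarrow> real^'n \<Rightarrow> real"
  assumes Bc: "\<forall>j k. continuous_on UNIV (B j k)"
    and N\<phi>: "N\<phi> \<in> null_sets lborel" and pm: "phi0 \<phi> N\<phi> \<in> borel_measurable borel"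
    and N\<psi>: "N\<psi> \<in> null_sets lborel" and qm: "psi0 \<psi> N\<psi> \<in> borel_measurable borel"
    and fin: "AE p in lborel. (\<integral>\<^sup>+z. Phi \<phi> N\<phi> z * ennreal (cmod (psi0 \<psi> N\<psi> (Tz z p))) \<partial>lborel) < \<infinity>"
  shows "AE p in lborel. integrable lborel (Fi B \<phi> N\<phi> \<psi> N\<psi> p) \<and>
           diamondB B \<phi> \<psi> (fst p) (snd p) = (LINT z|lborel. Fi B \<phi> N\<phi> \<psi> N\<psi> p z)"
  using fin null_section[OF N\<psi>]
proof eventually_elim
  case (elim p)
  let ?F = "Fi B \<phi> N\<phi> \<psi> N\<psi> p"
  have Fm: "?F \<in> borel_measurable lborel" by (rule Fi_meas1[OF Bc pm qm])
  have "(\<integral>\<^sup>+z. ennreal (norm (?F z)) \<partial>lborel) \<le> (\<integral>\<^sup>+z. Phi \<phi> N\<phi> z * ennreal (cmod (psi0 \<psi> N\<psi> (Tz z p))) \<partial>lborel)"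
    by (intro nn_integral_mono Fi_bound)
  then have "(\<integral>\<^sup>+z. ennreal (norm (?F z)) \<partial>lborel) < \<infinity>" using elim(1) by (rule le_less_trans)
  then have int: "integrable lborel ?F" using Fm by (intro integrableI_bounded) auto
  define E where "E z = \<phi> (fst p + (1/2) *\<^sub>R (z - snd p)) z * \<psi> (fst p + (1/2) *\<^sub>R z) (snd p - z) * omegaB B (fst p - (1/2) *\<^sub>R snd p) z (snd p - z)" for z
  have ae: "AE z in lborel. E z = ?F z"
    using elim(2) AE_not_in[OF N\<phi>]
  proof eventually_elim
    case (elim z)
    then show ?case by (simp add: E_def Fi_def phi0_def psi0_def Tz_def om_def)
  qed
  have ael: "AE z in lebesgue. ?F z = E z" using AE_completion[OF ae] by (auto elim: AE_mp)
  have Fml: "?F \<in> borel_measurable lebesgue" using Fm by (intro measurable_completion) simp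
  have Eml: "E \<in> borel_measurable lebesgue" by (rule borel_measurable_AE[OF Fml ael])
  have "diamondB B \<phi> \<psi> (fst p) (snd p) = (LINT z|lebesgue. E z)"
    unfolding diamondB_def E_def ..
  also have "\<dots> = (LINT z|lebesgue. ?F z)"
    using ael by (intro integral_cong_AE Eml Fml) (auto elim: AE_mp)
  also have "\<dots> = (LINT z|lborel. ?F z)"
    using Fm by (intro integral_completion) simp
  finally show ?case using int by simp
qed



lemma mag_cont:
  assumes "magnetic_field B"
  shows "\<forall>j k. continuous_on UNIV (B j k)"
proof (intro allI)
  fix j k
  have "BC_inf (B j k)" using assms by (simp add: magnetic_field_def)
  then have "\<forall>x. B j k differentiable (at x)" unfolding BC_inf_def
    by (metis pd.simps(1))
  then show "continuous_on UNIV (B j k)"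
    by (intro continuous_at_imp_continuous_on) (auto intro: differentiable_imp_continuous_within)
qed

lemma Phi_fin:
  assumes "in_Lfrak \<phi>"
  shows "Phi \<phi> N z < \<infinity>"
proof -
  have "bounded (range (\<lambda>x. \<phi> x z))" using assms by (simp add: in_Lfrak_def BCu_def)
  then obtain M where M: "\<And>x. cmod (\<phi> x z) \<le> M" by (auto simp: bounded_iff)
  have "Phi \<phi> N z \<le> ennreal M"
    unfolding Phi_def by (rule SUP_least) (auto simp: phi0_def intro!: ennreal_leI M order.trans[OF _ M])
  then show ?thesis using order.strict_trans1 by fastforce
qed

lemma gamma_conv:
  fixes B :: "real \<Rightarrow> 'n::finite \<Rightarrow> 'n \<Rightarrow> real^'n \<Rightarrow> real"
  assumes Bc: "\<forall>\<epsilon>\<in>S. \<forall>j k. continuous_on UNIV (B \<epsilon> j k)"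
    and B_cont: "\<forall>j k. \<forall>e>0. \<exists>d>0. \<forall>\<epsilon>\<in>S. \<bar>\<epsilon> - \<epsilon>0\<bar> < d \<longrightarrow> (\<forall>x. \<bar>B \<epsilon> j k x - B \<epsilon>0 j k x\<bar> \<le> e)"
    and e0: "\<epsilon>0 \<in> S"
  shows "((\<lambda>\<epsilon>. gammaB (B \<epsilon>) x y z) \<longlongrightarrow> gammaB (B \<epsilon>0) x y z) (at \<epsilon>0 within S)"
proof (rule tendstoI)
  fix e :: real assume e: "e > 0"
  define C where "C = (\<Sum>j\<in>UNIV. \<Sum>k\<in>UNIV. \<bar>y $ j\<bar> * \<bar>z $ k\<bar>)"
  have C0: "C \<ge> 0" unfolding C_def by (auto intro!: sum_nonneg)
  define e' where "e' = e / (2 * (C + 1))"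
  have e'0: "e' > 0" using e C0 by (simp add: e'_def)
  have ev: "eventually (\<lambda>\<epsilon>. \<forall>x. \<bar>B \<epsilon> j k x - B \<epsilon>0 j k x\<bar> \<le> e') (at \<epsilon>0 within S)" for j k
  proof -
    obtain d where d: "d > 0" "\<forall>\<epsilon>\<in>S. \<bar>\<epsilon> - \<epsilon>0\<bar> < d \<longrightarrow> (\<forall>x. \<bar>B \<epsilon> j k x - B \<epsilon>0 j k x\<bar> \<le> e')"
      using B_cont e'0 by blast
    show ?thesis unfolding eventually_at using d by (auto simp: dist_real_def)
  qed
  have "eventually (\<lambda>\<epsilon>. \<forall>j. \<forall>k. \<forall>x. \<bar>B \<epsilon> j k x - B \<epsilon>0 j k x\<bar> \<le> e') (at \<epsilon>0 within S)"
    by (intro eventually_all_finite ev)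
  moreover have "eventually (\<lambda>\<epsilon>. \<epsilon> \<in> S) (at \<epsilon>0 within S)" by (simp add: eventually_at_filter)
  ultimately show "eventually (\<lambda>\<epsilon>. dist (gammaB (B \<epsilon>) x y z) (gammaB (B \<epsilon>0) x y z) < e) (at \<epsilon>0 within S)"
  proof eventually_elim
    case (elim \<epsilon>)
    have "\<bar>gammaB (B \<epsilon>) x y z - gammaB (B \<epsilon>0) x y z\<bar> \<le> e' * C"
      unfolding C_def using Bc elim e0 by (intro gamma_diff) auto
    also have "\<dots> < e" using e C0 by (simp add: e'_def field_simps) (simp add: add_nonneg_pos)
    finally show ?case by (simp add: dist_real_def)
  qed
qed

lemma om_conv:
  fixes B :: "real \<Rightarrow> 'n::finite \<Rightarrow> 'n \<Rightarrow> real^'n \<Rightarrow> real"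
  assumes Bc: "\<forall>\<epsilon>\<in>S. \<forall>j k. continuous_on UNIV (B \<epsilon> j k)"
    and B_cont: "\<forall>j k. \<forall>e>0. \<exists>d>0. \<forall>\<epsilon>\<in>S. \<bar>\<epsilon> - \<epsilon>0\<bar> < d \<longrightarrow> (\<forall>x. \<bar>B \<epsilon> j k x - B \<epsilon>0 j k x\<bar> \<le> e)"
    and e0: "\<epsilon>0 \<in> S"
  shows "((\<lambda>\<epsilon>. om (B \<epsilon>) p z) \<longlongrightarrow> om (B \<epsilon>0) p z) (at \<epsilon>0 within S)"
  unfolding om_def omegaB_def
  by (intro tendsto_cis tendsto_minus gamma_conv[OF Bc B_cont e0])



lemma c_meas:
  fixes h :: "real^'n::finite \<Rightarrow> ennreal" and u :: "(real^'n) \<times> (real^'n) \<Rightarrow> ennreal"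
  assumes hm[measurable]: "h \<in> borel_measurable borel" and um[measurable]: "u \<in> borel_measurable borel"
  shows "(\<lambda>p. \<integral>\<^sup>+z. h z * u (Tz z p) \<partial>lborel) \<in> borel_measurable borel"
proof -
  have F: "(\<lambda>(p,z). h z * u (Tz z p)) \<in> borel_measurable (lborel \<Otimes>\<^sub>M lborel)"
    using measurable_compose[OF Tz_meas um] measurable_compose[OF snd_meas hm]
    by (simp add: case_prod_beta) measurable
  from lborel.borel_measurable_nn_integral[OF F] show ?thesis by simp
qed

lemma ae_fin:
  fixes c :: "(real^'n::finite) \<times> (real^'n) \<Rightarrow> ennreal"
  assumes "c \<in> borel_measurable borel" "(\<integral>\<^sup>+p. (c p)^2 \<partial>lborel) < \<infinity>"
  shows "AE p in lborel. c p < \<infinity>"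
proof -
  have "AE p in lborel. (c p)^2 \<noteq> \<infinity>"
    using assms by (intro nn_integral_PInf_AE) auto
  then show ?thesis by eventually_elim (simp add: top.not_eq_extremum[symmetric] power2_eq_square ennreal_mult_eq_top_iff)
qed

lemma u_sq:
  assumes "N \<in> null_sets lborel"
  shows "(\<integral>\<^sup>+p. (ennreal (cmod (psi0 \<psi> N p)))^2 \<partial>lborel) = L2_norm_sq \<psi>"
proof -
  have "L2_norm_sq \<psi> = (\<integral>\<^sup>+p. ennreal ((cmod (\<psi> (fst p) (snd p)))\<^sup>2) \<partial>lborel)"
    unfolding L2_norm_sq_def by (simp add: nn_integral_completion)
  also have "\<dots> = (\<integral>\<^sup>+p. (ennreal (cmod (psi0 \<psi> N p)))^2 \<partial>lborel)"
    using AE_not_in[OF assms] by (intro nn_integral_cong_AE) (auto simp: psi0_def ennreal_power)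
  finally show ?thesis ..
qed

lemma G_meas:
  fixes B :: "'n::finite \<Rightarrow> 'n \<Rightarrow> real^'n \<Rightarrow> real"
  assumes "\<forall>j k. continuous_on UNIV (B j k)"
    and pm: "phi0 \<phi> N\<phi> \<in> borel_measurable borel" and qm: "psi0 \<psi> N\<psi> \<in> borel_measurable borel"
  shows "(\<lambda>p. LINT z|lborel. Fi B \<phi> N\<phi> \<psi> N\<psi> p z) \<in> borel_measurable borel"
proof -
  have "case_prod (Fi B \<phi> N\<phi> \<psi> N\<psi>) \<in> borel_measurable (lborel \<Otimes>\<^sub>M lborel)"
    using Fi_meas[OF assms] by (simp add: case_prod_unfold)
  from lborel.borel_measurable_lebesgue_integral[OF this] show ?thesis by simp
qed

lemma inL2_eps:
  fixes B :: "'n::finite \<Rightarrow> 'n \<Rightarrow> real^'n \<Rightarrow> real"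
  assumes Bc: "\<forall>j k. continuous_on UNIV (B j k)" and \<phi>L: "in_Lfrak \<phi>"
    and N\<phi>: "N\<phi> \<in> null_sets lborel" and pm: "phi0 \<phi> N\<phi> \<in> borel_measurable borel"
    and \<psi>L: "in_L2 \<psi>"
    and N\<psi>: "N\<psi> \<in> null_sets lborel" and qm: "psi0 \<psi> N\<psi> \<in> borel_measurable borel"
  shows "(AE p in lborel. integrable lborel (Fi B \<phi> N\<phi> \<psi> N\<psi> p) \<and>
           diamondB B \<phi> \<psi> (fst p) (snd p) = (LINT z|lborel. Fi B \<phi> N\<phi> \<psi> N\<psi> p z))
         \<and> in_L2 (diamondB B \<phi> \<psi>)"
proof -
  define u where "u p = ennreal (cmod (psi0 \<psi> N\<psi> p))" for p
  have um: "u \<in> borel_measurable borel" unfolding u_def using qm by measurable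
  have hm: "Phi \<phi> N\<phi> \<in> borel_measurable borel" by (rule Phi_meas[OF \<phi>L pm])
  define c where "c p = (\<integral>\<^sup>+z. Phi \<phi> N\<phi> z * u (Tz z p) \<partial>lborel)" for p
  have cm: "c \<in> borel_measurable borel" unfolding c_def by (rule c_meas[OF hm um])
  have Lf: "Lfrak_norm \<phi> < \<infinity>" using \<phi>L by (simp add: in_Lfrak_def)
  have L2f: "L2_norm_sq \<psi> < \<infinity>" using \<psi>L by (simp add: in_L2_def)
  have "(\<integral>\<^sup>+p. (c p)^2 \<partial>lborel) \<le> (integral\<^sup>N lborel (Phi \<phi> N\<phi>))^2 * (\<integral>\<^sup>+p. (u p)^2 \<partial>lborel)"
    unfolding c_def by (rule schur[OF hm um])
  also have "\<dots> = (Lfrak_norm \<phi>)^2 * L2_norm_sq \<psi>"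
    unfolding u_def Phi_int[OF N\<phi>] u_sq[OF N\<psi>] ..
  also have "\<dots> < \<infinity>" using Lf L2f by (simp add: ennreal_mult_less_top power_less_top_ennreal)
  finally have c2: "(\<integral>\<^sup>+p. (c p)^2 \<partial>lborel) < \<infinity>" .
  have cfin: "AE p in lborel. c p < \<infinity>" by (rule ae_fin[OF cm c2])
  have R: "AE p in lborel. integrable lborel (Fi B \<phi> N\<phi> \<psi> N\<psi> p) \<and>
           diamondB B \<phi> \<psi> (fst p) (snd p) = (LINT z|lborel. Fi B \<phi> N\<phi> \<psi> N\<psi> p z)"
    using cfin unfolding c_def u_def by (intro repr[OF Bc N\<phi> pm N\<psi> qm])
  define G where "G p = (LINT z|lborel. Fi B \<phi> N\<phi> \<psi> N\<psi> p z)" for p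
  have Gm: "G \<in> borel_measurable borel" unfolding G_def by (rule G_meas[OF Bc pm qm])
  have Gml: "G \<in> borel_measurable lebesgue" using Gm by (intro measurable_completion) simp
  have aeG: "AE p in lebesgue. G p = diamondB B \<phi> \<psi> (fst p) (snd p)"
    using AE_completion[OF R] by (auto simp: G_def elim: AE_mp)
  have meas: "(\<lambda>p. diamondB B \<phi> \<psi> (fst p) (snd p)) \<in> borel_measurable lebesgue"
    by (rule borel_measurable_AE[OF Gml aeG])
  have bnd: "AE p in lborel. ennreal ((cmod (diamondB B \<phi> \<psi> (fst p) (snd p)))\<^sup>2) \<le> (c p)^2"
    using R
  proof eventually_elim
    case (elim p)
    have "ennreal (cmod (diamondB B \<phi> \<psi> (fst p) (snd p))) \<le> (\<integral>\<^sup>+z. ennreal (norm (Fi B \<phi> N\<phi> \<psi> N\<psi> p z)) \<partial>lborel)"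
      using elim by (simp add: integral_norm_bound_ennreal)
    also have "\<dots> \<le> c p" unfolding c_def u_def by (intro nn_integral_mono Fi_bound)
    finally have "ennreal (cmod (diamondB B \<phi> \<psi> (fst p) (snd p))) ^ 2 \<le> (c p)^2"
      by (intro power_mono) auto
    then show ?case by (simp add: ennreal_power)
  qed
  have "L2_norm_sq (diamondB B \<phi> \<psi>) = (\<integral>\<^sup>+p. ennreal ((cmod (diamondB B \<phi> \<psi> (fst p) (snd p)))\<^sup>2) \<partial>lborel)"
    unfolding L2_norm_sq_def by (simp add: nn_integral_completion)
  also have "\<dots> \<le> (\<integral>\<^sup>+p. (c p)^2 \<partial>lborel)" by (rule nn_integral_mono_AE[OF bnd])
  also have "\<dots> < \<infinity>" by (rule c2)
  finally show ?thesis using R meas unfolding in_L2_def by simp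
qed



definition bfun where
  "bfun B0 B1 h u p = (\<integral>\<^sup>+z. h z * (u (Tz z p) * ennreal (cmod (om B1 p z - om B0 p z))) \<partial>lborel)"

lemma bint_meas:
  fixes B0 B1 :: "'n::finite \<Rightarrow> 'n \<Rightarrow> real^'n \<Rightarrow> real"
  assumes B0: "\<forall>j k. continuous_on UNIV (B0 j k)" and B1: "\<forall>j k. continuous_on UNIV (B1 j k)"
    and hm[measurable]: "h \<in> borel_measurable borel" and um[measurable]: "u \<in> borel_measurable borel"
  shows "(\<lambda>(p,z). h z * (u (Tz z p) * ennreal (cmod (om B1 p z - om B0 p z)))) \<in> borel_measurable (lborel \<Otimes>\<^sub>M lborel)"
proof -
  have o0[measurable]: "(\<lambda>x::((real^'n) \<times> (real^'n)) \<times> (real^'n). om B0 (fst x) (snd x)) \<in> borel_measurable (lborel \<Otimes>\<^sub>M lborel)"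
    by (rule cont_meas_pair[OF om_cont[OF B0]])
  have o1[measurable]: "(\<lambda>x::((real^'n) \<times> (real^'n)) \<times> (real^'n). om B1 (fst x) (snd x)) \<in> borel_measurable (lborel \<Otimes>\<^sub>M lborel)"
    by (rule cont_meas_pair[OF om_cont[OF B1]])
  show ?thesis
    using measurable_compose[OF Tz_meas um] measurable_compose[OF snd_meas hm]
    by (simp add: case_prod_beta) measurable
qed

lemma bfun_meas:
  fixes B0 B1 :: "'n::finite \<Rightarrow> 'n \<Rightarrow> real^'n \<Rightarrow> real"
  assumes B0: "\<forall>j k. continuous_on UNIV (B0 j k)" and B1: "\<forall>j k. continuous_on UNIV (B1 j k)"
    and hm: "h \<in> borel_measurable borel" and um: "u \<in> borel_measurable borel"
  shows "bfun B0 B1 h u \<in> borel_measurable borel"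
  using lborel.borel_measurable_nn_integral[OF bint_meas[OF B0 B1 hm um]] unfolding bfun_def by simp

lemma bfun_meas1:
  fixes B0 B1 :: "'n::finite \<Rightarrow> 'n \<Rightarrow> real^'n \<Rightarrow> real"
  assumes B0: "\<forall>j k. continuous_on UNIV (B0 j k)" and B1: "\<forall>j k. continuous_on UNIV (B1 j k)"
    and hm: "h \<in> borel_measurable borel" and um: "u \<in> borel_measurable borel"
  shows "(\<lambda>z. h z * (u (Tz z p) * ennreal (cmod (om B1 p z - om B0 p z)))) \<in> borel_measurable lborel"
  using measurable_Pair2[OF bint_meas[OF B0 B1 hm um], of p] by simp

lemma om_diff_le: "ennreal (cmod (om B1 p z - om B0 p z)) \<le> 2"
proof -
  have "cmod (om B1 p z - om B0 p z) \<le> cmod (om B1 p z) + cmod (om B0 p z)" by (rule norm_triangle_ineq4)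
  then have "cmod (om B1 p z - om B0 p z) \<le> 2" by simp
  then show ?thesis using ennreal_leI by fastforce
qed

lemma bfun_le:
  fixes h :: "real^'n::finite \<Rightarrow> ennreal" and u :: "(real^'n) \<times> (real^'n) \<Rightarrow> ennreal"
  assumes hm[measurable]: "h \<in> borel_measurable borel" and um[measurable]: "u \<in> borel_measurable borel"
  shows "bfun B0 B1 h u p \<le> 2 * (\<integral>\<^sup>+z. h z * u (Tz z p) \<partial>lborel)"
proof -
  have m: "(\<lambda>z. h z * u (Tz z p)) \<in> borel_measurable lborel"
    using measurable_compose[OF Tz_meas1 um] by measurable
  have "bfun B0 B1 h u p \<le> (\<integral>\<^sup>+z. 2 * (h z * u (Tz z p)) \<partial>lborel)"
    unfolding bfun_def
  proof (intro nn_integral_mono)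
    fix z
    have "h z * (u (Tz z p) * ennreal (cmod (om B1 p z - om B0 p z))) \<le> h z * (u (Tz z p) * 2)"
      by (intro mult_left_mono om_diff_le) auto
    then show "h z * (u (Tz z p) * ennreal (cmod (om B1 p z - om B0 p z))) \<le> 2 * (h z * u (Tz z p))"
      by (simp add: ac_simps)
  qed
  also have "\<dots> = 2 * (\<integral>\<^sup>+z. h z * u (Tz z p) \<partial>lborel)"
    using m by (rule nn_integral_cmult)
  finally show ?thesis .
qed

lemma Blim:
  fixes B :: "real \<Rightarrow> 'n::finite \<Rightarrow> 'n \<Rightarrow> real^'n \<Rightarrow> real"
  assumes Bc: "\<forall>\<epsilon>\<in>S. \<forall>j k. continuous_on UNIV (B \<epsilon> j k)"
    and B_cont: "\<forall>j k. \<forall>e>0. \<exists>d>0. \<forall>\<epsilon>\<in>S. \<bar>\<epsilon> - \<epsilon>0\<bar> < d \<longrightarrow> (\<forall>x. \<bar>B \<epsilon> j k x - B \<epsilon>0 j k x\<bar> \<le> e)"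
    and e0: "\<epsilon>0 \<in> S"
    and hm: "h \<in> borel_measurable borel" and um: "u \<in> borel_measurable borel"
    and hfin: "\<And>z. h z < \<infinity>" and ufin: "\<And>p. u p < \<infinity>"
    and c2: "(\<integral>\<^sup>+p. (\<integral>\<^sup>+z. h z * u (Tz z p) \<partial>lborel)^2 \<partial>lborel) < \<infinity>"
  shows "((\<lambda>\<epsilon>. \<integral>\<^sup>+p. (bfun (B \<epsilon>0) (B \<epsilon>) h u p)^2 \<partial>lborel) \<longlongrightarrow> 0) (at \<epsilon>0 within S)"
proof -
  define c where "c p = (\<integral>\<^sup>+z. h z * u (Tz z p) \<partial>lborel)" for p
  have cm: "c \<in> borel_measurable borel" unfolding c_def by (rule c_meas[OF hm um])
  have cfin: "AE p in lborel. c p < \<infinity>" using c2 unfolding c_def[symmetric] by (rule ae_fin[OF cm])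
  show ?thesis unfolding tendsto_at_iff_sequentially comp_def
  proof (intro allI impI)
    fix X :: "nat \<Rightarrow> real" assume XS: "\<forall>i. X i \<in> S - {\<epsilon>0}" and Xl: "X \<longlonglongrightarrow> \<epsilon>0"
    have XF: "filterlim X (at \<epsilon>0 within S) sequentially"
      unfolding filterlim_at using XS Xl by auto
    have BX: "\<forall>j k. continuous_on UNIV (B (X i) j k)" for i using Bc XS by auto
    have B0: "\<forall>j k. continuous_on UNIV (B \<epsilon>0 j k)" using Bc e0 by auto
    have "(\<lambda>i. \<integral>\<^sup>+p. (bfun (B \<epsilon>0) (B (X i)) h u p)^2 \<partial>lborel) \<longlonglongrightarrow> (\<integral>\<^sup>+(p::(real^'n) \<times> (real^'n)). 0 \<partial>lborel)"
    proof (rule nn_integral_dominated_convergence[where w="\<lambda>p. 4 * (c p)^2"])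
      show "(\<lambda>p. (bfun (B \<epsilon>0) (B (X i)) h u p)^2) \<in> borel_measurable lborel" for i
        using bfun_meas[OF B0 BX hm um] by measurable
      show "(\<lambda>p. 0) \<in> borel_measurable lborel" by simp
      show "(\<lambda>p. 4 * (c p)^2) \<in> borel_measurable lborel" using cm by measurable
      show "AE p in lborel. (bfun (B \<epsilon>0) (B (X i)) h u p)^2 \<le> 4 * (c p)^2" for i
      proof (intro AE_I2)
        fix p
        have "(bfun (B \<epsilon>0) (B (X i)) h u p)^2 \<le> (2 * c p)^2"
          unfolding c_def by (intro power_mono bfun_le hm um) auto
        then show "(bfun (B \<epsilon>0) (B (X i)) h u p)^2 \<le> 4 * (c p)^2"
          by (simp add: power_mult_distrib)
      qed
      have "(\<integral>\<^sup>+p. 4 * (c p)^2 \<partial>lborel) = 4 * (\<integral>\<^sup>+p. (c p)^2 \<partial>lborel)"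
        using cm by (intro nn_integral_cmult) measurable
      also have "\<dots> < \<infinity>" using c2 unfolding c_def by (simp add: ennreal_mult_less_top)
      finally show "(\<integral>\<^sup>+p. 4 * (c p)^2 \<partial>lborel) < \<infinity>" .
      show "AE p in lborel. (\<lambda>i. (bfun (B \<epsilon>0) (B (X i)) h u p)^2) \<longlonglongrightarrow> 0"
        using cfin
      proof eventually_elim
        case (elim p)
        have "(\<lambda>i. bfun (B \<epsilon>0) (B (X i)) h u p) \<longlonglongrightarrow> (\<integral>\<^sup>+(z::real^'n). 0 \<partial>lborel)"
          unfolding bfun_def
        proof (rule nn_integral_dominated_convergence[where w="\<lambda>z. 2 * (h z * u (Tz z p))"])
          show "(\<lambda>z. h z * (u (Tz z p) * ennreal (cmod (om (B (X i)) p z - om (B \<epsilon>0) p z)))) \<in> borel_measurable lborel" for i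
            by (rule bfun_meas1[OF B0 BX hm um])
          show "(\<lambda>z. 0) \<in> borel_measurable lborel" by simp
          have m: "(\<lambda>z. h z * u (Tz z p)) \<in> borel_measurable lborel"
            using measurable_compose[OF Tz_meas1 um] hm by measurable
          then show "(\<lambda>z. 2 * (h z * u (Tz z p))) \<in> borel_measurable lborel" by measurable
          show "AE z in lborel. h z * (u (Tz z p) * ennreal (cmod (om (B (X i)) p z - om (B \<epsilon>0) p z))) \<le> 2 * (h z * u (Tz z p))" for i
          proof (intro AE_I2)
            fix z
            have "h z * (u (Tz z p) * ennreal (cmod (om (B (X i)) p z - om (B \<epsilon>0) p z))) \<le> h z * (u (Tz z p) * 2)"
              by (intro mult_left_mono om_diff_le) auto
            then show "h z * (u (Tz z p) * ennreal (cmod (om (B (X i)) p z - om (B \<epsilon>0) p z))) \<le> 2 * (h z * u (Tz z p))"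
              by (simp add: ac_simps)
          qed
          have "(\<integral>\<^sup>+z. 2 * (h z * u (Tz z p)) \<partial>lborel) = 2 * c p"
            unfolding c_def using m by (rule nn_integral_cmult)
          also have "\<dots> < \<infinity>" using elim by (simp add: ennreal_mult_less_top)
          finally show "(\<integral>\<^sup>+z. 2 * (h z * u (Tz z p)) \<partial>lborel) < \<infinity>" .
          show "AE z in lborel. (\<lambda>i. h z * (u (Tz z p) * ennreal (cmod (om (B (X i)) p z - om (B \<epsilon>0) p z)))) \<longlonglongrightarrow> 0"
          proof (intro AE_I2)
            fix z
            have "((\<lambda>\<epsilon>. om (B \<epsilon>) p z) \<longlongrightarrow> om (B \<epsilon>0) p z) (at \<epsilon>0 within S)"
              by (rule om_conv[OF Bc B_cont e0])
            from filterlim_compose[OF this XF]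
            have "(\<lambda>i. om (B (X i)) p z) \<longlonglongrightarrow> om (B \<epsilon>0) p z" .
            then have "(\<lambda>i. om (B (X i)) p z - om (B \<epsilon>0) p z) \<longlonglongrightarrow> om (B \<epsilon>0) p z - om (B \<epsilon>0) p z"
              by (intro tendsto_diff tendsto_const)
            then have "(\<lambda>i. cmod (om (B (X i)) p z - om (B \<epsilon>0) p z)) \<longlonglongrightarrow> cmod (0::complex)"
              by (intro tendsto_norm) simp
            then have "(\<lambda>i. ennreal (cmod (om (B (X i)) p z - om (B \<epsilon>0) p z))) \<longlonglongrightarrow> ennreal 0"
              by (intro tendsto_ennrealI) simp
            then have "(\<lambda>i. h z * (u (Tz z p) * ennreal (cmod (om (B (X i)) p z - om (B \<epsilon>0) p z)))) \<longlonglongrightarrow> h z * (u (Tz z p) * ennreal 0)"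
              by (intro ennreal_tendsto_cmult) (use hfin ufin in auto)
            then show "(\<lambda>i. h z * (u (Tz z p) * ennreal (cmod (om (B (X i)) p z - om (B \<epsilon>0) p z)))) \<longlonglongrightarrow> 0"
              by simp
          qed
        qed
        then have "(\<lambda>i. bfun (B \<epsilon>0) (B (X i)) h u p) \<longlonglongrightarrow> 0" by simp
        then have "(\<lambda>i. bfun (B \<epsilon>0) (B (X i)) h u p * bfun (B \<epsilon>0) (B (X i)) h u p) \<longlonglongrightarrow> 0 * 0"
          by (intro tendsto_mult_ennreal) auto
        then show ?case by (simp add: power2_eq_square)
      qed
    qed
    then show "(\<lambda>i. \<integral>\<^sup>+p. (bfun (B \<epsilon>0) (B (X i)) h u p)^2 \<partial>lborel) \<longlonglongrightarrow> 0" by simp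
  qed
qed



lemma sq_sum_le: "((a::ennreal) + b)^2 \<le> 2 * a^2 + 2 * b^2"
proof -
  have "(a + b)^2 = a^2 + 2 * a * b + b^2" by (simp add: power2_sum)
  also have "\<dots> \<le> a^2 + (a^2 + b^2) + b^2"
    by (intro add_mono order_refl sum_of_squares_ge_ennreal)
  also have "\<dots> = 2 * a^2 + 2 * b^2" by (simp add: mult_2 ac_simps)
  finally show ?thesis .
qed

lemma pointwise_diff:
  fixes P1 P0 q w1 w0 :: complex
  assumes "cmod w1 = 1"
  shows "ennreal (cmod (P1 * q * w1 - P0 * q * w0)) \<le> ennreal (cmod (P1 - P0)) * ennreal (cmod q) + ennreal (cmod P0) * (ennreal (cmod q) * ennreal (cmod (w1 - w0)))"
proof -
  have "P1 * q * w1 - P0 * q * w0 = (P1 - P0) * q * w1 + P0 * (q * (w1 - w0))" by (simp add: algebra_simps)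
  then have "cmod (P1 * q * w1 - P0 * q * w0) \<le> cmod ((P1 - P0) * q * w1) + cmod (P0 * (q * (w1 - w0)))"
    by (metis norm_triangle_ineq)
  also have "\<dots> = cmod (P1 - P0) * cmod q + cmod P0 * (cmod q * cmod (w1 - w0))"
    using assms(1) by (simp add: norm_mult)
  finally show ?thesis
    by (simp add: ennreal_mult[symmetric] ennreal_plus[symmetric] del: ennreal_plus ennreal_mult)
qed

lemma cont_eps:
  fixes B :: "real \<Rightarrow> 'n::finite \<Rightarrow> 'n \<Rightarrow> real^'n \<Rightarrow> real"
    and \<phi> :: "real \<Rightarrow> real^'n \<Rightarrow> real^'n \<Rightarrow> complex"
    and \<psi> :: "real^'n \<Rightarrow> real^'n \<Rightarrow> complex"
    and Nf :: "real \<Rightarrow> (real^'n) set"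
  assumes Bc: "\<forall>\<epsilon>\<in>S. \<forall>j k. continuous_on UNIV (B \<epsilon> j k)"
    and B_cont: "\<forall>j k. \<forall>e>0. \<exists>d>0. \<forall>\<epsilon>\<in>S. \<bar>\<epsilon> - \<epsilon>0\<bar> < d \<longrightarrow> (\<forall>x. \<bar>B \<epsilon> j k x - B \<epsilon>0 j k x\<bar> \<le> e)"
    and \<phi>L: "\<forall>\<epsilon>\<in>S. in_Lfrak (\<phi> \<epsilon>)"
    and Nf: "\<forall>\<epsilon>\<in>S. Nf \<epsilon> \<in> null_sets lborel \<and> phi0 (\<phi> \<epsilon>) (Nf \<epsilon>) \<in> borel_measurable borel"
    and \<phi>c: "((\<lambda>\<epsilon>. Lfrak_norm (\<lambda>x y. \<phi> \<epsilon> x y - \<phi> \<epsilon>0 x y)) \<longlongrightarrow> 0) (at \<epsilon>0 within S)"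
    and \<psi>L: "in_L2 \<psi>" and N\<psi>: "N\<psi> \<in> null_sets lborel" and qm: "psi0 \<psi> N\<psi> \<in> borel_measurable borel"
    and e0: "\<epsilon>0 \<in> S"
  shows "((\<lambda>\<epsilon>. L2_norm_sq (\<lambda>x y. diamondB (B \<epsilon>) (\<phi> \<epsilon>) \<psi> x y - diamondB (B \<epsilon>0) (\<phi> \<epsilon>0) \<psi> x y)) \<longlongrightarrow> 0) (at \<epsilon>0 within S)"
proof -
  define u where "u p = ennreal (cmod (psi0 \<psi> N\<psi> p))" for p
  have um: "u \<in> borel_measurable borel" unfolding u_def using qm by measurable
  define U where "U = (\<integral>\<^sup>+p. (u p)^2 \<partial>lborel)"
  have Ufin: "U < \<infinity>" unfolding U_def u_def u_sq[OF N\<psi>] using \<psi>L by (simp add: in_L2_def)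
  define P where "P \<epsilon> = phi0 (\<phi> \<epsilon>) (Nf \<epsilon>)" for \<epsilon>
  define F where "F \<epsilon> = Fi (B \<epsilon>) (\<phi> \<epsilon>) (Nf \<epsilon>) \<psi> N\<psi>" for \<epsilon>
  define D where "D \<epsilon> p = diamondB (B \<epsilon>) (\<phi> \<epsilon>) \<psi> (fst p) (snd p)" for \<epsilon> p
  define h0 where "h0 = Phi (\<phi> \<epsilon>0) (Nf \<epsilon>0)"
  have B0: "\<forall>j k. continuous_on UNIV (B \<epsilon>0 j k)" using Bc e0 by auto
  have h0m: "h0 \<in> borel_measurable borel" unfolding h0_def using \<phi>L Nf e0 by (intro Phi_meas) auto
  have R: "AE p in lborel. integrable lborel (F \<epsilon> p) \<and> D \<epsilon> p = (LINT z|lborel. F \<epsilon> p z)" if "\<epsilon> \<in> S" for \<epsilon>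
    using inL2_eps[of "B \<epsilon>" "\<phi> \<epsilon>" "Nf \<epsilon>" \<psi> N\<psi>] that Bc \<phi>L Nf \<psi>L N\<psi> qm
    unfolding F_def D_def by auto
  define \<Delta> where "\<Delta> \<epsilon> z = (SUP w. ennreal (cmod (P \<epsilon> (w, z) - P \<epsilon>0 (w, z))))" for \<epsilon> z
  have \<Delta>m: "\<Delta> \<epsilon> \<in> borel_measurable borel" if "\<epsilon> \<in> S" for \<epsilon>
  proof -
    have m1: "P \<epsilon> \<in> borel_measurable borel" "P \<epsilon>0 \<in> borel_measurable borel"
      using Nf that e0 unfolding P_def by auto
    have "(\<lambda>p. P \<epsilon> (fst p, snd p) - P \<epsilon>0 (fst p, snd p)) \<in> borel_measurable borel"
      using m1 by simp
    moreover have "continuous_on UNIV (\<lambda>w. P \<epsilon> (w, z) - P \<epsilon>0 (w, z))" for z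
      unfolding P_def using phi0_cont \<phi>L that e0 by (intro continuous_intros) auto
    ultimately show ?thesis unfolding \<Delta>_def by (intro sup_meas[where f="\<lambda>w z. P \<epsilon> (w, z) - P \<epsilon>0 (w, z)"]) auto
  qed
  have \<Delta>int: "integral\<^sup>N lborel (\<Delta> \<epsilon>) = Lfrak_norm (\<lambda>x y. \<phi> \<epsilon> x y - \<phi> \<epsilon>0 x y)" if "\<epsilon> \<in> S" for \<epsilon>
  proof -
    have "Lfrak_norm (\<lambda>x y. \<phi> \<epsilon> x y - \<phi> \<epsilon>0 x y) = (\<integral>\<^sup>+ y. (SUP x. ennreal (cmod (\<phi> \<epsilon> x y - \<phi> \<epsilon>0 x y))) \<partial>lborel)"
      unfolding Lfrak_norm_def by (simp add: nn_integral_completion)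
    also have "\<dots> = integral\<^sup>N lborel (\<Delta> \<epsilon>)"
    proof (rule nn_integral_cong_AE)
      have n1: "AE z in lborel. z \<notin> Nf \<epsilon>" using Nf that by (intro AE_not_in) auto
      have n0: "AE z in lborel. z \<notin> Nf \<epsilon>0" using Nf e0 by (intro AE_not_in) auto
      show "AE z in lborel. (SUP x. ennreal (cmod (\<phi> \<epsilon> x z - \<phi> \<epsilon>0 x z))) = \<Delta> \<epsilon> z"
        using n1 n0 by eventually_elim (simp add: \<Delta>_def P_def phi0_def)
    qed
    finally show ?thesis ..
  qed
  define a where "a \<epsilon> p = (\<integral>\<^sup>+z. \<Delta> \<epsilon> z * u (Tz z p) \<partial>lborel)" for \<epsilon> p
  define b where "b \<epsilon> p = bfun (B \<epsilon>0) (B \<epsilon>) h0 u p" for \<epsilon> p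
  have am: "a \<epsilon> \<in> borel_measurable borel" if "\<epsilon> \<in> S" for \<epsilon>
    unfolding a_def by (rule c_meas[OF \<Delta>m[OF that] um])
  have bm: "b \<epsilon> \<in> borel_measurable borel" if "\<epsilon> \<in> S" for \<epsilon>
    unfolding b_def using Bc that by (intro bfun_meas[OF B0 _ h0m um]) auto
  have pw: "AE p in lborel. ennreal (cmod (D \<epsilon> p - D \<epsilon>0 p)) \<le> a \<epsilon> p + b \<epsilon> p" if S: "\<epsilon> \<in> S" for \<epsilon>
    using R[OF S] R[OF e0]
  proof eventually_elim
    case (elim p)
    have i1: "integrable lborel (F \<epsilon> p)" and i0: "integrable lborel (F \<epsilon>0 p)" using elim by auto
    have "D \<epsilon> p - D \<epsilon>0 p = (LINT z|lborel. F \<epsilon> p z - F \<epsilon>0 p z)"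
      using elim i1 i0 by (simp add: Bochner_Integration.integral_diff)
    then have "ennreal (cmod (D \<epsilon> p - D \<epsilon>0 p)) \<le> (\<integral>\<^sup>+z. ennreal (norm (F \<epsilon> p z - F \<epsilon>0 p z)) \<partial>lborel)"
      using integral_norm_bound_ennreal[OF Bochner_Integration.integrable_diff[OF i1 i0]] by simp
    also have "\<dots> \<le> (\<integral>\<^sup>+z. \<Delta> \<epsilon> z * u (Tz z p) + h0 z * (u (Tz z p) * ennreal (cmod (om (B \<epsilon>) p z - om (B \<epsilon>0) p z))) \<partial>lborel)"
    proof (intro nn_integral_mono)
      fix z
      let ?w = "(fst p + (1/2) *\<^sub>R (z - snd p), z)"
      have "ennreal (norm (F \<epsilon> p z - F \<epsilon>0 p z)) \<le> ennreal (cmod (P \<epsilon> ?w - P \<epsilon>0 ?w)) * ennreal (cmod (psi0 \<psi> N\<psi> (Tz z p))) + ennreal (cmod (P \<epsilon>0 ?w)) * (ennreal (cmod (psi0 \<psi> N\<psi> (Tz z p))) * ennreal (cmod (om (B \<epsilon>) p z - om (B \<epsilon>0) p z)))"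
        unfolding F_def Fi_def P_def by (rule pointwise_diff) simp
      also have "\<dots> \<le> \<Delta> \<epsilon> z * u (Tz z p) + h0 z * (u (Tz z p) * ennreal (cmod (om (B \<epsilon>) p z - om (B \<epsilon>0) p z)))"
        unfolding u_def \<Delta>_def h0_def Phi_def P_def
        by (intro add_mono mult_right_mono SUP_upper) auto
      finally show "ennreal (norm (F \<epsilon> p z - F \<epsilon>0 p z)) \<le> \<Delta> \<epsilon> z * u (Tz z p) + h0 z * (u (Tz z p) * ennreal (cmod (om (B \<epsilon>) p z - om (B \<epsilon>0) p z)))" .
    qed
    also have "\<dots> = a \<epsilon> p + b \<epsilon> p"
      unfolding a_def b_def bfun_def
    proof (rule nn_integral_add)
      show "(\<lambda>z. \<Delta> \<epsilon> z * u (Tz z p)) \<in> borel_measurable lborel"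
        using measurable_compose[OF Tz_meas1 um] \<Delta>m[OF S] by measurable
      show "(\<lambda>z. h0 z * (u (Tz z p) * ennreal (cmod (om (B \<epsilon>) p z - om (B \<epsilon>0) p z)))) \<in> borel_measurable lborel"
        using Bc S by (intro bfun_meas1[OF B0 _ h0m um]) auto
    qed
    finally show ?case .
  qed
  define Bd where "Bd \<epsilon> = 2 * ((Lfrak_norm (\<lambda>x y. \<phi> \<epsilon> x y - \<phi> \<epsilon>0 x y))^2 * U) + 2 * (\<integral>\<^sup>+p. (b \<epsilon> p)^2 \<partial>lborel)" for \<epsilon>
  have le: "L2_norm_sq (\<lambda>x y. diamondB (B \<epsilon>) (\<phi> \<epsilon>) \<psi> x y - diamondB (B \<epsilon>0) (\<phi> \<epsilon>0) \<psi> x y) \<le> Bd \<epsilon>" if S: "\<epsilon> \<in> S" for \<epsilon>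
  proof -
    have "L2_norm_sq (\<lambda>x y. diamondB (B \<epsilon>) (\<phi> \<epsilon>) \<psi> x y - diamondB (B \<epsilon>0) (\<phi> \<epsilon>0) \<psi> x y)
        = (\<integral>\<^sup>+p. ennreal ((cmod (D \<epsilon> p - D \<epsilon>0 p))\<^sup>2) \<partial>lborel)"
      unfolding L2_norm_sq_def D_def by (simp add: nn_integral_completion)
    also have "\<dots> \<le> (\<integral>\<^sup>+p. 2 * (a \<epsilon> p)^2 + 2 * (b \<epsilon> p)^2 \<partial>lborel)"
    proof (rule nn_integral_mono_AE)
      show "AE p in lborel. ennreal ((cmod (D \<epsilon> p - D \<epsilon>0 p))\<^sup>2) \<le> 2 * (a \<epsilon> p)^2 + 2 * (b \<epsilon> p)^2"
        using pw[OF S]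
      proof eventually_elim
        case (elim p)
        have "ennreal ((cmod (D \<epsilon> p - D \<epsilon>0 p))\<^sup>2) = (ennreal (cmod (D \<epsilon> p - D \<epsilon>0 p)))^2"
          by (simp add: ennreal_power)
        also have "\<dots> \<le> (a \<epsilon> p + b \<epsilon> p)^2" using elim by (intro power_mono) auto
        also have "\<dots> \<le> 2 * (a \<epsilon> p)^2 + 2 * (b \<epsilon> p)^2" by (rule sq_sum_le)
        finally show ?case .
      qed
    qed
    also have "\<dots> = 2 * (\<integral>\<^sup>+p. (a \<epsilon> p)^2 \<partial>lborel) + 2 * (\<integral>\<^sup>+p. (b \<epsilon> p)^2 \<partial>lborel)"
      using am[OF S] bm[OF S] by (simp add: nn_integral_add nn_integral_cmult)
    also have "(\<integral>\<^sup>+p. (a \<epsilon> p)^2 \<partial>lborel) \<le> (Lfrak_norm (\<lambda>x y. \<phi> \<epsilon> x y - \<phi> \<epsilon>0 x y))^2 * U"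
    proof -
      have "(\<integral>\<^sup>+p. (a \<epsilon> p)^2 \<partial>lborel) \<le> (integral\<^sup>N lborel (\<Delta> \<epsilon>))^2 * U"
        unfolding a_def U_def by (rule schur[OF \<Delta>m[OF S] um])
      then show ?thesis using \<Delta>int[OF S] by simp
    qed
    then have "2 * (\<integral>\<^sup>+p. (a \<epsilon> p)^2 \<partial>lborel) + 2 * (\<integral>\<^sup>+p. (b \<epsilon> p)^2 \<partial>lborel) \<le> Bd \<epsilon>"
      unfolding Bd_def by (intro add_mono mult_left_mono) auto
    finally show ?thesis .
  qed
  have lim1: "((\<lambda>\<epsilon>. 2 * ((Lfrak_norm (\<lambda>x y. \<phi> \<epsilon> x y - \<phi> \<epsilon>0 x y))^2 * U)) \<longlongrightarrow> 2 * (0^2 * U)) (at \<epsilon>0 within S)"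
  proof -
    have "((\<lambda>\<epsilon>. Lfrak_norm (\<lambda>x y. \<phi> \<epsilon> x y - \<phi> \<epsilon>0 x y) * Lfrak_norm (\<lambda>x y. \<phi> \<epsilon> x y - \<phi> \<epsilon>0 x y)) \<longlongrightarrow> 0 * 0) (at \<epsilon>0 within S)"
      by (intro tendsto_mult_ennreal \<phi>c) auto
    then have "((\<lambda>\<epsilon>. (Lfrak_norm (\<lambda>x y. \<phi> \<epsilon> x y - \<phi> \<epsilon>0 x y))^2 * U) \<longlongrightarrow> 0^2 * U) (at \<epsilon>0 within S)"
      using Ufin by (intro tendsto_mult_ennreal) (auto simp: power2_eq_square)
    then show ?thesis by (intro ennreal_tendsto_cmult) auto
  qed
  have lim2: "((\<lambda>\<epsilon>. 2 * (\<integral>\<^sup>+p. (b \<epsilon> p)^2 \<partial>lborel)) \<longlongrightarrow> 2 * 0) (at \<epsilon>0 within S)"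
  proof (intro ennreal_tendsto_cmult)
    have c2: "(\<integral>\<^sup>+p. (\<integral>\<^sup>+z. h0 z * u (Tz z p) \<partial>lborel)^2 \<partial>lborel) < \<infinity>"
    proof -
      have "(\<integral>\<^sup>+p. (\<integral>\<^sup>+z. h0 z * u (Tz z p) \<partial>lborel)^2 \<partial>lborel) \<le> (integral\<^sup>N lborel h0)^2 * U"
        unfolding U_def by (rule schur[OF h0m um])
      also have "\<dots> = (Lfrak_norm (\<phi> \<epsilon>0))^2 * U" unfolding h0_def using Nf e0 by (simp add: Phi_int)
      also have "\<dots> < \<infinity>" using \<phi>L e0 Ufin by (simp add: in_Lfrak_def ennreal_mult_less_top power_less_top_ennreal)
      finally show ?thesis .
    qed
    show "((\<lambda>\<epsilon>. \<integral>\<^sup>+p. (b \<epsilon> p)^2 \<partial>lborel) \<longlongrightarrow> 0) (at \<epsilon>0 within S)"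
      unfolding b_def
        by (rule Blim[OF Bc B_cont e0 h0m um _ _ c2]) (use \<phi>L e0 Phi_fin[of "\<phi> \<epsilon>0" "Nf \<epsilon>0"] in \<open>auto simp: h0_def u_def\<close>)
  qed auto
  have "(Bd \<longlongrightarrow> 2 * (0^2 * U) + 2 * 0) (at \<epsilon>0 within S)"
    unfolding Bd_def by (intro tendsto_add lim1 lim2)
  then have Bl: "(Bd \<longlongrightarrow> 0) (at \<epsilon>0 within S)" by simp
  show ?thesis
  proof (rule tendsto_sandwich[OF _ _ tendsto_const Bl])
    show "eventually (\<lambda>\<epsilon>. 0 \<le> L2_norm_sq (\<lambda>x y. diamondB (B \<epsilon>) (\<phi> \<epsilon>) \<psi> x y - diamondB (B \<epsilon>0) (\<phi> \<epsilon>0) \<psi> x y)) (at \<epsilon>0 within S)"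
      by simp
    show "eventually (\<lambda>\<epsilon>. L2_norm_sq (\<lambda>x y. diamondB (B \<epsilon>) (\<phi> \<epsilon>) \<psi> x y - diamondB (B \<epsilon>0) (\<phi> \<epsilon>0) \<psi> x y) \<le> Bd \<epsilon>) (at \<epsilon>0 within S)"
      using le by (auto simp: eventually_at_filter)
  qed
qed



theorem lemma3:
  fixes a b :: real
    and B :: "real \<Rightarrow> 'n::finite \<Rightarrow> 'n \<Rightarrow> real^'n \<Rightarrow> real"
    and \<phi> :: "real \<Rightarrow> real^'n \<Rightarrow> real^'n \<Rightarrow> complex"
    and \<psi> :: "real^'n \<Rightarrow> real^'n \<Rightarrow> complex"
  assumes B_mag: "\<forall>\<epsilon>\<in>{a..b}. magnetic_field (B \<epsilon>)"
    and B_cont: "\<forall>j k is. \<forall>\<epsilon>0\<in>{a..b}. \<forall>e>0. \<exists>d>0. \<forall>\<epsilon>\<in>{a..b}. \<bar>\<epsilon> - \<epsilon>0\<bar> < d \<longrightarrow>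
                  (\<forall>x. \<bar>pd is (B \<epsilon> j k) x - pd is (B \<epsilon>0 j k) x\<bar> \<le> e)"
    and \<phi>_L: "\<forall>\<epsilon>\<in>{a..b}. in_Lfrak (\<phi> \<epsilon>)"
    and \<phi>_cont: "\<forall>\<epsilon>0\<in>{a..b}. ((\<lambda>\<epsilon>. Lfrak_norm (\<lambda>x y. \<phi> \<epsilon> x y - \<phi> \<epsilon>0 x y)) \<longlongrightarrow> 0) (at \<epsilon>0 within {a..b})"
    and \<psi>_L2: "in_L2 \<psi>"
  shows "(\<forall>\<epsilon>\<in>{a..b}. in_L2 (diamondB (B \<epsilon>) (\<phi> \<epsilon>) \<psi>)) \<and>
         (\<forall>\<epsilon>0\<in>{a..b}. ((\<lambda>\<epsilon>. L2_norm_sq (\<lambda>x y. diamondB (B \<epsilon>) (\<phi> \<epsilon>) \<psi> x y - diamondB (B \<epsilon>0) (\<phi> \<epsilon>0) \<psi> x y))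
              \<longlongrightarrow> 0) (at \<epsilon>0 within {a..b}))"
proof -
  have Bc: "\<forall>\<epsilon>\<in>{a..b}. \<forall>j k. continuous_on UNIV (B \<epsilon> j k)"
    using B_mag mag_cont by blast
  have "\<forall>\<epsilon>\<in>{a..b}. \<exists>N. N \<in> null_sets lborel \<and> phi0 (\<phi> \<epsilon>) N \<in> borel_measurable borel"
  proof
    fix \<epsilon> assume "\<epsilon> \<in> {a..b}"
    then obtain N where "N \<in> null_sets lborel" "(\<lambda>p. if snd p \<in> N then 0 else \<phi> \<epsilon> (fst p) (snd p)) \<in> borel_measurable borel"
      using phi_struct \<phi>_L by blast
    then show "\<exists>N. N \<in> null_sets lborel \<and> phi0 (\<phi> \<epsilon>) N \<in> borel_measurable borel"
      by (intro exI[of _ N]) (simp add: phi0_def[abs_def])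
  qed
  then obtain Nf where Nf: "\<forall>\<epsilon>\<in>{a..b}. Nf \<epsilon> \<in> null_sets lborel \<and> phi0 (\<phi> \<epsilon>) (Nf \<epsilon>) \<in> borel_measurable borel"
    by (rule bchoice[THEN exE])
  obtain N\<psi> where N\<psi>: "N\<psi> \<in> null_sets lborel" "(\<lambda>p. if p \<in> N\<psi> then 0 else \<psi> (fst p) (snd p)) \<in> borel_measurable borel"
    using psi_struct[OF \<psi>_L2] by blast
  have qm: "psi0 \<psi> N\<psi> \<in> borel_measurable borel" using N\<psi>(2) by (simp add: psi0_def[abs_def])
  have part1: "\<forall>\<epsilon>\<in>{a..b}. in_L2 (diamondB (B \<epsilon>) (\<phi> \<epsilon>) \<psi>)"
  proof
    fix \<epsilon> assume e: "\<epsilon> \<in> {a..b}"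
    show "in_L2 (diamondB (B \<epsilon>) (\<phi> \<epsilon>) \<psi>)"
      using inL2_eps[of "B \<epsilon>" "\<phi> \<epsilon>" "Nf \<epsilon>" \<psi> N\<psi>] e Bc \<phi>_L Nf \<psi>_L2 N\<psi>(1) qm by auto
  qed
  have part2: "\<forall>\<epsilon>0\<in>{a..b}. ((\<lambda>\<epsilon>. L2_norm_sq (\<lambda>x y. diamondB (B \<epsilon>) (\<phi> \<epsilon>) \<psi> x y - diamondB (B \<epsilon>0) (\<phi> \<epsilon>0) \<psi> x y))
              \<longlongrightarrow> 0) (at \<epsilon>0 within {a..b})"
  proof
    fix \<epsilon>0 assume e0: "\<epsilon>0 \<in> {a..b}"
    have Bc0: "\<forall>j k. \<forall>e>0. \<exists>d>0. \<forall>\<epsilon>\<in>{a..b}. \<bar>\<epsilon> - \<epsilon>0\<bar> < d \<longrightarrow> (\<forall>x. \<bar>B \<epsilon> j k x - B \<epsilon>0 j k x\<bar> \<le> e)"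
      using B_cont e0 by (metis pd.simps(1))
    show "((\<lambda>\<epsilon>. L2_norm_sq (\<lambda>x y. diamondB (B \<epsilon>) (\<phi> \<epsilon>) \<psi> x y - diamondB (B \<epsilon>0) (\<phi> \<epsilon>0) \<psi> x y))
              \<longlongrightarrow> 0) (at \<epsilon>0 within {a..b})"
      by (rule cont_eps[OF Bc Bc0 \<phi>_L Nf \<phi>_cont[rule_format, OF e0] \<psi>_L2 N\<psi>(1) qm e0])
  qed
  show ?thesis using part1 part2 by blast
qed


end
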